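(* Let $\Pi$ be a problem and $\Pi'_1$ its derived simplified problem (as in the context). Let $\mathcal G_{n,\Delta}$ be a $\Sigma$-input-labeled graph class consisting of $n$-node graphs with maximum degree $\Delta$, such that the input labels of every graph in $\mathcal G_{n,\Delta}$ contain an orientation of each edge (encoded at both $(u,e)$ and $(v,e)$ for $e=\{u,v\}$). Assume $\mathcal G_{n,\Delta}$ is $t$-independent for some positive integer $t$ and contains only graphs of girth at least $2t+2$. Then the following are equivalent: (1) There is a (port numbering model) algorithm solving $\Pi$ on $\mathcal G_{n,\Delta}$ in time $t$. (2) There is a (port numbering model) algorithm solving $\Pi'_1$ on $\mathcal G_{n,\Delta}$ in time $t-1$.
   Context: All graphs are simple, undirected and connected; $B(G)$ is the set of pairs $(v,e)$ with $v$ an endpoint of edge $e$. Multisets ignore order; $2^S$ is the power set. Input labels: a set $\Sigma$ with finite $\Sigma_{n,\Delta}\subseteq\Sigma$ for each $(n,\Delta)$; a $\Sigma$-input-labeled graph ($n$ nodes, max degree $\Delta$) carries $\varphi_G:B(G)\to\Sigma_{n,\Delta}$. Problems: $\Pi=(\mathcal O,f,g,h)$, $f(\Delta)\subseteq\mathcal O$ finite, $g(\Delta)$ a set of 2-element multisets over $f(\Delta)$, $h(\Delta)$ a set of multisets of at most $\Delta$ elements of $f(\Delta)$. An algorithm solves $\Pi$ on a class if on each graph of max degree $\Delta$ it outputs $o_{v,e}\in f(\Delta)$ at each $(v,e)\in B(G)$ with $\{o_{u,e},o_{v,e}\}\in g(\Delta)$ for every edge $\{u,v\}=e$ and the multiset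 of outputs at each node in $h(\Delta)$. Model: port numbering model; nodes know $n,\Delta$ and the input labels at their ports; synchronous rounds, unbounded messages/computation; a $t$-round algorithm maps each radius-$t$ neighborhood (topology, ports, inputs) of $v$ to one output per port. Neighborhoods: $N^t(v)$ = information $v$ gathers in $t$ rounds; $N^t(e)=N^t(u)\cap N^t(v)$; $\mathrm{ext}^t_e(v)=N^t(e)\setminus N^{t-1}(v)$; $\mathrm{ext}^t_v(e)=N^t(v)\setminus N^t(e)$. $t$-independence of $\mathcal G_{n,\Delta}$: for every $G\in\mathcal G_{n,\Delta}$, node $v$, edge $e=\{u,v\}$: (i) any extension of $N^t_G(e)$ along $v$ realized in some graph of the class and any extension along $u$ realized in some graph of the class are realized simultaneously around a single edge $e'$ of a single graph $H$ of the class with $N^t_H(e')\cong N^t_G(e)$; (ii) for any choice, for every edge $e'$ incident to $v$, of an extension of $N^{t-1}_G(v)$ along $e'$ realized in some graph of the class, all chosen extensions are realized simultaneously at a single node $w$ of a single graph $H$ of the class with $N^{t-1}_H(w)\cong N^{t-1}_G(v)$. Derived simplified problems: from $\Pi$ define $\Pi'_{1/2}$: $f_{1/2}(\Delta)=2^{f(\Delta)}$; $g'_{1/2}(\Delta)$ = all $\{Y,Z\}$ with $Y,Z\in f_{1/2}(\Delta)$ such that (P) $\{y,z\}\in g(\Delta)$ for all $y\in Y,z\in Z$, and $Y,Z$ are maximal with this property (for every $Y'\supsetneq Y$, $\{Y',Z\}$ fails (P), and for every $Z'\supsetneq Z$, $\{Y,Z'\}$ fails (P)); $h_{1/2}(\Delta)$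 = all $\{Y_1,\dots,Y_i\}$, $i\le\Delta$, such that some $y_j\in Y_j$ give $\{y_1,\dots,y_i\}\in h(\Delta)$. Then $\Pi'_1$: $f_1(\Delta)=2^{f_{1/2}(\Delta)}$; $g_1(\Delta)$ = all $\{Y,Z\}$ such that some $y\in Y,z\in Z$ give $\{y,z\}\in g'_{1/2}(\Delta)$; $h'_1(\Delta)$ = all $\{Y_1,\dots,Y_i\}$, $i\le\Delta$, such that (Q) $\{y_1,\dots,y_i\}\in h_{1/2}(\Delta)$ for all $y_j\in Y_j$, and the $Y_j$ are maximal with this property (for each $j$ and each $Y'_j\supsetneq Y_j$, replacing $Y_j$ by $Y'_j$ violates (Q)). *)

theory Defs
  imports Main "HOL-Library.Multiset"
begin

text \<open>Nodes are 0..<nv G; node v has ports 0..<deg G v; the half-edge set B(G) is the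
  set of ports. conn G p is the port at the other end of the edge leaving via p;
  inp G p is the input label at p.\<close>

record 'l pgraph =
  nv   :: nat
  deg  :: "nat \<Rightarrow> nat"
  conn :: "nat \<times> nat \<Rightarrow> nat \<times> nat"
  inp  :: "nat \<times> nat \<Rightarrow> 'l"

definition ports :: "'l pgraph \<Rightarrow> (nat \<times> nat) set" where
  "ports G = {(v,i). v < nv G \<and> i < deg G v}"

definition adj :: "'l pgraph \<Rightarrow> nat \<Rightarrow> nat \<Rightarrow> bool" where
  "adj G v u \<longleftrightarrow> (\<exists>i < deg G v. fst (conn G (v,i)) = u)"

definition simple_connected_pgraph :: "'l pgraph \<Rightarrow> bool" where
  "simple_connected_pgraph G \<longleftrightarrow>
     (\<forall>p\<in>ports G. conn G p \<in> ports G \<and> conn G (conn G p) = p \<and> fst (conn G p) \<noteq> fst p) \<and>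
     (\<forall>p\<in>ports G. \<forall>q\<in>ports G. fst p = fst q \<and> fst (conn G p) = fst (conn G q) \<longrightarrow> p = q) \<and>
     (\<forall>u < nv G. \<forall>v < nv G. (u,v) \<in> {(a,b). adj G a b}\<^sup>*)"

definition max_degree :: "'l pgraph \<Rightarrow> nat \<Rightarrow> bool" where
  "max_degree G \<Delta> \<longleftrightarrow> (\<forall>v < nv G. deg G v \<le> \<Delta>) \<and> (\<exists>v < nv G. deg G v = \<Delta>)"

definition is_cycle :: "'l pgraph \<Rightarrow> nat list \<Rightarrow> bool" where
  "is_cycle G vs \<longleftrightarrow> length vs \<ge> 3 \<and> distinct vs \<and> set vs \<subseteq> {..<nv G} \<and>
     (\<forall>k < length vs. adj G (vs ! k) (vs ! ((k + 1) mod length vs)))"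

definition girth_at_least :: "'l pgraph \<Rightarrow> nat \<Rightarrow> bool" where
  "girth_at_least G g \<longleftrightarrow> (\<forall>vs. is_cycle G vs \<longrightarrow> length vs \<ge> g)"

fun ball :: "'l pgraph \<Rightarrow> nat \<Rightarrow> nat \<Rightarrow> nat set" where
  "ball G 0 v = {v}"
| "ball G (Suc k) v = ball G k v \<union> {u. \<exists>w\<in>ball G k v. adj G w u}"

fun inner :: "'l pgraph \<Rightarrow> nat \<Rightarrow> nat \<Rightarrow> nat set" where
  "inner G 0 v = {}"
| "inner G (Suc k) v = ball G k v"

text \<open>N^t(v): the nodes at distance \<le> t (with their degrees and the input labels at all
  their ports), and the edges (given by their ports) having an endpoint at distance \<le> t-1.\<close>
definition nbE :: "'l pgraph \<Rightarrow> nat \<Rightarrow> nat \<Rightarrow> (nat \<times> nat) set" where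
  "nbE G t v = {p \<in> ports G. fst p \<in> inner G t v \<or> fst (conn G p) \<in> inner G t v}"

definition nbhd :: "'l pgraph \<Rightarrow> nat \<Rightarrow> nat \<Rightarrow> nat set \<times> (nat \<times> nat) set" where
  "nbhd G t v = (ball G t v, nbE G t v)"

definition enbhd :: "'l pgraph \<Rightarrow> nat \<Rightarrow> nat \<Rightarrow> nat \<Rightarrow> nat set \<times> (nat \<times> nat) set" where
  "enbhd G t v u = (ball G t v \<inter> ball G t u, nbE G t v \<inter> nbE G t u)"

definition nb_iso :: "'l pgraph \<Rightarrow> nat set \<times> (nat \<times> nat) set \<Rightarrow> 'l pgraph \<Rightarrow>
    nat set \<times> (nat \<times> nat) set \<Rightarrow> (nat \<Rightarrow> nat) \<Rightarrow> bool" where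
  "nb_iso G N H N' \<sigma> \<longleftrightarrow> bij_betw \<sigma> (fst N) (fst N') \<and>
     (\<forall>w\<in>fst N. deg H (\<sigma> w) = deg G w \<and>
        (\<forall>i < deg G w. inp H (\<sigma> w, i) = inp G (w, i) \<and>
           ((w,i) \<in> snd N \<longleftrightarrow> (\<sigma> w, i) \<in> snd N') \<and>
           ((w,i) \<in> snd N \<longrightarrow>
              conn H (\<sigma> w, i) = (\<sigma> (fst (conn G (w,i))), snd (conn G (w,i))))))"

definition nbhd_iso :: "nat \<Rightarrow> 'l pgraph \<Rightarrow> nat \<Rightarrow> 'l pgraph \<Rightarrow> nat \<Rightarrow> bool" where
  "nbhd_iso t G v H v' \<longleftrightarrow> (\<exists>\<sigma>. nb_iso G (nbhd G t v) H (nbhd H t v') \<sigma> \<and> \<sigma> v = v')"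

definition nbhd_iso2 :: "nat \<Rightarrow> 'l pgraph \<Rightarrow> nat \<Rightarrow> nat \<Rightarrow> 'l pgraph \<Rightarrow> nat \<Rightarrow> nat \<Rightarrow> bool" where
  "nbhd_iso2 t G v u H v' u' \<longleftrightarrow>
     (\<exists>\<sigma>. nb_iso G (nbhd G t v) H (nbhd H t v') \<sigma> \<and> \<sigma> v = v' \<and> \<sigma> u = u')"

definition enbhd_iso :: "nat \<Rightarrow> 'l pgraph \<Rightarrow> nat \<Rightarrow> nat \<Rightarrow> 'l pgraph \<Rightarrow> nat \<Rightarrow> nat \<Rightarrow> bool" where
  "enbhd_iso t G v u H v' u' \<longleftrightarrow>
     (\<exists>\<sigma>. nb_iso G (enbhd G t v u) H (enbhd H t v' u') \<sigma> \<and> \<sigma> v = v' \<and> \<sigma> u = u')"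

text \<open>Edges are addressed by a port p = (v,i) of one endpoint; the other endpoint is
  fst (conn G p).  (i): an extension of N^t(e) along v is N^t_{H1}(v1) for some H1 in the
  class with N^t_{H1}(e1) \<cong> N^t_G(e); similarly along u. (ii): an extension of
  N^{t-1}(v) along the edge at port k is N^t_{H_k}(e_k) for some H_k in the class with
  N^{t-1}_{H_k}(w_k) \<cong> N^{t-1}_G(v), e_k being the edge at port k of w_k.\<close>
definition t_independent :: "'l pgraph set \<Rightarrow> nat \<Rightarrow> bool" where
  "t_independent C t \<longleftrightarrow> (\<forall>G\<in>C. \<forall>p\<in>ports G.
     (let v = fst p; u = fst (conn G p) in
      (\<forall>H1\<in>C. \<forall>p1\<in>ports H1. \<forall>H2\<in>C. \<forall>p2\<in>ports H2.
         let v1 = fst p1; u1 = fst (conn H1 p1); v2 = fst p2; u2 = fst (conn H2 p2) in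
         enbhd_iso t H1 v1 u1 G v u \<longrightarrow> enbhd_iso t H2 v2 u2 G v u \<longrightarrow>
         (\<exists>H\<in>C. \<exists>q\<in>ports H. let v' = fst q; u' = fst (conn H q) in
            enbhd_iso t H v' u' G v u \<and>
            nbhd_iso2 t H v' u' H1 v1 u1 \<and> nbhd_iso2 t H u' v' H2 u2 v2))) \<and>
     (\<forall>Hs ws. (\<forall>k < deg G (fst p). Hs k \<in> C \<and> ws k < nv (Hs k) \<and>
                 nbhd_iso (t - 1) (Hs k) (ws k) G (fst p)) \<longrightarrow>
        (\<exists>H\<in>C. \<exists>w < nv H. nbhd_iso (t - 1) H w G (fst p) \<and>
           (\<forall>k < deg G (fst p).
              enbhd_iso t H w (fst (conn H (w,k))) (Hs k) (ws k) (fst (conn (Hs k) (ws k, k)))))))"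

record 'o problem =
  fP :: "nat \<Rightarrow> 'o set"
  gP :: "nat \<Rightarrow> 'o multiset set"
  hP :: "nat \<Rightarrow> 'o multiset set"

definition problem_wf :: "'o problem \<Rightarrow> bool" where
  "problem_wf P \<longleftrightarrow> (\<forall>\<Delta>. finite (fP P \<Delta>) \<and>
     (\<forall>M\<in>gP P \<Delta>. size M = 2 \<and> set_mset M \<subseteq> fP P \<Delta>) \<and>
     (\<forall>M\<in>hP P \<Delta>. size M \<le> \<Delta> \<and> set_mset M \<subseteq> fP P \<Delta>))"

definition all_g :: "'o problem \<Rightarrow> nat \<Rightarrow> 'o set \<Rightarrow> 'o set \<Rightarrow> bool" where
  "all_g P \<Delta> Y Z \<longleftrightarrow> (\<forall>y\<in>Y. \<forall>z\<in>Z. {#y, z#} \<in> gP P \<Delta>)"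

definition half_problem :: "'o problem \<Rightarrow> 'o set problem" where
  "half_problem P = \<lparr>
     fP = (\<lambda>\<Delta>. Pow (fP P \<Delta>)),
     gP = (\<lambda>\<Delta>. {{#Y, Z#} | Y Z. Y \<subseteq> fP P \<Delta> \<and> Z \<subseteq> fP P \<Delta> \<and> all_g P \<Delta> Y Z \<and>
              (\<forall>Y'. Y \<subset> Y' \<and> Y' \<subseteq> fP P \<Delta> \<longrightarrow> \<not> all_g P \<Delta> Y' Z) \<and>
              (\<forall>Z'. Z \<subset> Z' \<and> Z' \<subseteq> fP P \<Delta> \<longrightarrow> \<not> all_g P \<Delta> Y Z')}),
     hP = (\<lambda>\<Delta>. {mset Ys | Ys. length Ys \<le> \<Delta> \<and> set Ys \<subseteq> Pow (fP P \<Delta>) \<and>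
              (\<exists>ys. list_all2 (\<in>) ys Ys \<and> mset ys \<in> hP P \<Delta>)}) \<rparr>"

definition all_h :: "'o problem \<Rightarrow> nat \<Rightarrow> 'o set list \<Rightarrow> bool" where
  "all_h P \<Delta> Ys \<longleftrightarrow> (\<forall>ys. list_all2 (\<in>) ys Ys \<longrightarrow> mset ys \<in> hP P \<Delta>)"

definition one_problem :: "'o problem \<Rightarrow> 'o set set problem" where
  "one_problem P = (let Q = half_problem P in \<lparr>
     fP = (\<lambda>\<Delta>. Pow (fP Q \<Delta>)),
     gP = (\<lambda>\<Delta>. {{#Y, Z#} | Y Z. Y \<subseteq> fP Q \<Delta> \<and> Z \<subseteq> fP Q \<Delta> \<and>
              (\<exists>y\<in>Y. \<exists>z\<in>Z. {#y, z#} \<in> gP Q \<Delta>)}),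
     hP = (\<lambda>\<Delta>. {mset Ys | Ys. length Ys \<le> \<Delta> \<and> set Ys \<subseteq> Pow (fP Q \<Delta>) \<and> all_h Q \<Delta> Ys \<and>
              (\<forall>j < length Ys. \<forall>Y'. Ys ! j \<subset> Y' \<and> Y' \<subseteq> fP Q \<Delta> \<longrightarrow>
                  \<not> all_h Q \<Delta> (Ys[j := Y']))}) \<rparr>)"

text \<open>A t-round algorithm on class C: output at port i of v (in graph G) is a function of
  the isomorphism type of N^t_G(v) (n and \<Delta> are fixed for the class).\<close>
definition t_round_alg :: "'l pgraph set \<Rightarrow> nat \<Rightarrow> ('l pgraph \<Rightarrow> nat \<Rightarrow> nat \<Rightarrow> 'o) \<Rightarrow> bool" where
  "t_round_alg C t A \<longleftrightarrow> (\<forall>G\<in>C. \<forall>H\<in>C. \<forall>v < nv G. \<forall>v' < nv H.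
      nbhd_iso t G v H v' \<longrightarrow> (\<forall>i < deg G v. A G v i = A H v' i))"

definition solves :: "'l pgraph set \<Rightarrow> nat \<Rightarrow> 'o problem \<Rightarrow> ('l pgraph \<Rightarrow> nat \<Rightarrow> nat \<Rightarrow> 'o) \<Rightarrow> bool" where
  "solves C \<Delta> P A \<longleftrightarrow> (\<forall>G\<in>C. \<forall>v < nv G.
      (\<forall>i < deg G v. A G v i \<in> fP P \<Delta> \<and>
         {#A G v i, A G (fst (conn G (v,i))) (snd (conn G (v,i)))#} \<in> gP P \<Delta>) \<and>
      mset (map (A G v) [0..<deg G v]) \<in> hP P \<Delta>)"

end

theory Submission
  imports Defs
begin

definition wfN :: "'l pgraph \<Rightarrow> nat set \<times> (nat \<times> nat) set \<Rightarrow> bool" where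
  "wfN G N \<longleftrightarrow> (\<forall>w\<in>fst N. \<forall>i<deg G w. (w,i) \<in> snd N \<longrightarrow> fst (conn G (w,i)) \<in> fst N)"

lemma nb_iso_refl: "nb_iso G N G N id"
  unfolding nb_iso_def by auto

lemma nb_iso_sym:
  assumes "nb_iso G N H N' \<sigma>" "wfN G N"
  shows "nb_iso H N' G N (inv_into (fst N) \<sigma>)"
proof -
  let ?t = "inv_into (fst N) \<sigma>"
  have b: "bij_betw \<sigma> (fst N) (fst N')" using assms(1) unfolding nb_iso_def by auto
  have b2: "bij_betw ?t (fst N') (fst N)" using b by (rule bij_betw_inv_into)
  have tin: "?t w' \<in> fst N" "\<sigma> (?t w') = w'" if "w' \<in> fst N'" for w'
    using b that by (auto simp: bij_betw_def inv_into_into f_inv_into_f)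
  have ts: "?t (\<sigma> w) = w" if "w \<in> fst N" for w
    using b that by (simp add: bij_betw_def)
  show ?thesis unfolding nb_iso_def
  proof (intro conjI b2 ballI allI impI)
    fix w' assume w': "w' \<in> fst N'"
    define w where "w = ?t w'"
    have w: "w \<in> fst N" "\<sigma> w = w'" using tin[OF w'] by (auto simp: w_def)
    have P: "deg H (\<sigma> w) = deg G w \<and> (\<forall>i < deg G w. inp H (\<sigma> w, i) = inp G (w, i) \<and>
           ((w,i) \<in> snd N \<longleftrightarrow> (\<sigma> w, i) \<in> snd N') \<and>
           ((w,i) \<in> snd N \<longrightarrow>
              conn H (\<sigma> w, i) = (\<sigma> (fst (conn G (w,i))), snd (conn G (w,i)))))"
      using assms(1) w(1) unfolding nb_iso_def by blast
    show "deg G (?t w') = deg H w'" using P w by (simp add: w_def[symmetric])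
    fix i assume i: "i < deg H w'"
    hence i': "i < deg G w" using P w by simp
    show "inp G (?t w', i) = inp H (w', i)" using P w i' by (simp add: w_def[symmetric])
    show "((w', i) \<in> snd N') = ((?t w', i) \<in> snd N)" using P w i' by (simp add: w_def[symmetric])
  next
    fix w' i assume w': "w' \<in> fst N'" and i: "i < deg H w'" and inN: "(w', i) \<in> snd N'"
    define w where "w = ?t w'"
    have w: "w \<in> fst N" "\<sigma> w = w'" using tin[OF w'] by (auto simp: w_def)
    have P: "deg H (\<sigma> w) = deg G w \<and> (\<forall>i < deg G w. inp H (\<sigma> w, i) = inp G (w, i) \<and>
           ((w,i) \<in> snd N \<longleftrightarrow> (\<sigma> w, i) \<in> snd N') \<and>
           ((w,i) \<in> snd N \<longrightarrow>
              conn H (\<sigma> w, i) = (\<sigma> (fst (conn G (w,i))), snd (conn G (w,i)))))"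
      using assms(1) w(1) unfolding nb_iso_def by blast
    have i': "i < deg G w" using P w i by simp
    have e: "(w,i) \<in> snd N" using P w i' inN by simp
    have c: "conn H (w', i) = (\<sigma> (fst (conn G (w,i))), snd (conn G (w,i)))" using P w i' e by simp
    have f: "fst (conn G (w,i)) \<in> fst N" using assms(2) w(1) i' e unfolding wfN_def by blast
    show "conn G (?t w', i) = (?t (fst (conn H (w', i))), snd (conn H (w', i)))"
      using c ts[OF f] by (simp add: w_def[symmetric] prod_eq_iff)
  qed
qed

lemma nb_iso_trans:
  assumes "nb_iso G N H N' \<sigma>" "nb_iso H N' K N'' \<tau>" "wfN G N"
  shows "nb_iso G N K N'' (\<tau> \<circ> \<sigma>)"
proof -
  have b: "bij_betw \<sigma> (fst N) (fst N')" using assms(1) unfolding nb_iso_def by auto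
  have b2: "bij_betw \<tau> (fst N') (fst N'')" using assms(2) unfolding nb_iso_def by auto
  show ?thesis unfolding nb_iso_def
  proof (intro conjI ballI allI impI)
    show "bij_betw (\<tau> \<circ> \<sigma>) (fst N) (fst N'')" using b b2 by (rule bij_betw_trans)
  next
    fix w assume w: "w \<in> fst N"
    have w': "\<sigma> w \<in> fst N'" using b w by (auto simp: bij_betw_def)
    have P: "deg H (\<sigma> w) = deg G w \<and> (\<forall>i < deg G w. inp H (\<sigma> w, i) = inp G (w, i) \<and>
           ((w,i) \<in> snd N \<longleftrightarrow> (\<sigma> w, i) \<in> snd N') \<and>
           ((w,i) \<in> snd N \<longrightarrow>
              conn H (\<sigma> w, i) = (\<sigma> (fst (conn G (w,i))), snd (conn G (w,i)))))"
      using assms(1) w unfolding nb_iso_def by blast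
    have Q: "deg K (\<tau> (\<sigma> w)) = deg H (\<sigma> w) \<and> (\<forall>i < deg H (\<sigma> w). inp K (\<tau> (\<sigma> w), i) = inp H (\<sigma> w, i) \<and>
           ((\<sigma> w,i) \<in> snd N' \<longleftrightarrow> (\<tau> (\<sigma> w), i) \<in> snd N'') \<and>
           ((\<sigma> w,i) \<in> snd N' \<longrightarrow>
              conn K (\<tau> (\<sigma> w), i) = (\<tau> (fst (conn H (\<sigma> w,i))), snd (conn H (\<sigma> w,i)))))"
      using assms(2) w' unfolding nb_iso_def by blast
    show "deg K ((\<tau> \<circ> \<sigma>) w) = deg G w" using P Q by simp
    fix i assume i: "i < deg G w"
    show "inp K ((\<tau> \<circ> \<sigma>) w, i) = inp G (w, i)" using P Q i by simp
    show "((w, i) \<in> snd N) = (((\<tau> \<circ> \<sigma>) w, i) \<in> snd N'')" using P Q i by simp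
    assume e: "(w, i) \<in> snd N"
    show "conn K ((\<tau> \<circ> \<sigma>) w, i) = ((\<tau> \<circ> \<sigma>) (fst (conn G (w, i))), snd (conn G (w, i)))"
      using P Q i e by simp
  qed
qed

lemma in_inner_ball: "x \<in> inner G t v \<Longrightarrow> x \<in> ball G t v"
  by (cases t) auto

lemma ball_mono_Suc: "ball G k v \<subseteq> ball G (Suc k) v" by auto

lemma ball_mono: "k \<le> m \<Longrightarrow> ball G k v \<subseteq> ball G m v"
proof (induction m)
  case 0 then show ?case by simp
next
  case (Suc m) then show ?case using ball_mono_Suc[of G m v] by (cases "k = Suc m") auto
qed

lemma in_ball: "v \<in> ball G k v"
  by (induction k) auto

lemma adj_ball: "w \<in> ball G k v \<Longrightarrow> adj G w u \<Longrightarrow> u \<in> ball G (Suc k) v"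
  by auto

lemma adj_port: "i < deg G w \<Longrightarrow> adj G w (fst (conn G (w,i)))"
  unfolding adj_def by blast

lemma ball_trans: "w \<in> ball G s v \<Longrightarrow> ball G r w \<subseteq> ball G (s + r) v"
proof (induction r)
  case 0 then show ?case by simp
next
  case (Suc r) then show ?case by auto
qed

lemma nbE_conn_ball: "p \<in> nbE G t v \<Longrightarrow> fst (conn G p) \<in> ball G t v"
proof -
  assume p: "p \<in> nbE G t v"
  then obtain x i where xi: "p = (x,i)" "i < deg G x" unfolding nbE_def ports_def by auto
  show ?thesis
  proof (cases t)
    case 0 then show ?thesis using p by (simp add: nbE_def)
  next
    case (Suc k)
    show ?thesis using p Suc xi adj_ball[OF _ adj_port[OF xi(2)], of k v] ball_mono_Suc[of G k v]
      by (auto simp: nbE_def)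
  qed
qed

lemma wfN_nbhd: "wfN G (nbhd G t v)"
  unfolding wfN_def nbhd_def using nbE_conn_ball by fastforce

lemma wfN_enbhd: "wfN G (enbhd G t v u)"
  unfolding wfN_def enbhd_def using nbE_conn_ball by fastforce


lemma sg_conn_ports: "simple_connected_pgraph G \<Longrightarrow> p \<in> ports G \<Longrightarrow> conn G p \<in> ports G"
  unfolding simple_connected_pgraph_def by blast
lemma sg_conn_conn: "simple_connected_pgraph G \<Longrightarrow> p \<in> ports G \<Longrightarrow> conn G (conn G p) = p"
  unfolding simple_connected_pgraph_def by blast
lemma sg_uniq: "simple_connected_pgraph G \<Longrightarrow> p \<in> ports G \<Longrightarrow> q \<in> ports G \<Longrightarrow>
   fst p = fst q \<Longrightarrow> fst (conn G p) = fst (conn G q) \<Longrightarrow> p = q"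
  unfolding simple_connected_pgraph_def by blast

lemma ports_iff: "(x,i) \<in> ports G \<longleftrightarrow> x < nv G \<and> i < deg G x"
  unfolding ports_def by auto

lemma ball_nv: assumes "simple_connected_pgraph G" "v < nv G" shows "ball G k v \<subseteq> {..<nv G}"
proof (induction k)
  case 0 then show ?case using assms by simp
next
  case (Suc k)
  have "u < nv G" if wk: "w \<in> ball G k v" and awu: "adj G w u" for w u
  proof -
    obtain i where i: "i < deg G w" "fst (conn G (w,i)) = u" using awu unfolding adj_def by blast
    have "(w,i) \<in> ports G" using i Suc wk by (auto simp: ports_iff)
    hence "conn G (w,i) \<in> ports G" using sg_conn_ports assms by blast
    then show ?thesis using i unfolding ports_def by auto
  qed
  then show ?case using Suc by auto
qed

lemma adj_sym: assumes "simple_connected_pgraph G" "w < nv G" "adj G w u" shows "adj G u w"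
proof -
  obtain i where i: "i < deg G w" "fst (conn G (w,i)) = u" using assms(3) unfolding adj_def by blast
  have p: "(w,i) \<in> ports G" using i assms by (auto simp: ports_iff)
  have c: "conn G (w,i) \<in> ports G" using sg_conn_ports assms(1) p by blast
  have cc: "conn G (conn G (w,i)) = (w,i)" using sg_conn_conn assms(1) p by blast
  show ?thesis unfolding adj_def using c cc i
    by (intro exI[of _ "snd (conn G (w,i))"]) (auto simp: ports_def)
qed

locale isoctx =
  fixes G H :: "'l pgraph" and t v v' and \<sigma> :: "nat \<Rightarrow> nat"
  assumes sG: "simple_connected_pgraph G" and sH: "simple_connected_pgraph H"
    and v: "v < nv G" and v': "v' < nv H"
    and iso: "nb_iso G (nbhd G t v) H (nbhd H t v') \<sigma>" and sv: "\<sigma> v = v'"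
begin

lemma bij: "bij_betw \<sigma> (ball G t v) (ball H t v')"
  using iso by (simp add: nb_iso_def nbhd_def)

lemma inj: "inj_on \<sigma> (ball G t v)" using bij by (simp add: bij_betw_def)

lemma P: "x \<in> ball G t v \<Longrightarrow> deg H (\<sigma> x) = deg G x \<and> (\<forall>i < deg G x. inp H (\<sigma> x, i) = inp G (x, i) \<and>
           ((x,i) \<in> nbE G t v \<longleftrightarrow> (\<sigma> x, i) \<in> nbE H t v') \<and>
           ((x,i) \<in> nbE G t v \<longrightarrow>
              conn H (\<sigma> x, i) = (\<sigma> (fst (conn G (x,i))), snd (conn G (x,i)))))"
  using iso unfolding nb_iso_def nbhd_def by auto

lemma degs: "x \<in> ball G t v \<Longrightarrow> deg H (\<sigma> x) = deg G x" using P by blast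

lemma connP: assumes "x \<in> ball G k v" "k < t" "i < deg G x"
  shows "conn H (\<sigma> x, i) = (\<sigma> (fst (conn G (x,i))), snd (conn G (x,i)))"
proof -
  have "k \<le> t - 1" using assms by simp
  hence xt: "x \<in> ball G (t - 1) v" using assms(1) ball_mono[of k "t-1" G v] by blast
  hence "x \<in> ball G t v" using ball_mono[of "t-1" t G v] by auto
  moreover have "(x,i) \<in> nbE G t v"
    using xt assms ball_nv[OF sG v] by (cases t) (auto simp: nbE_def ports_iff)
  ultimately show ?thesis using P assms(3) by blast
qed

lemma img: "w \<in> ball G s v \<Longrightarrow> r + s \<le> t \<Longrightarrow> \<sigma> ` ball G r w = ball H r (\<sigma> w)"
proof (induction r)
  case 0 then show ?case by simp
next
  case (Suc r)
  have IH: "\<sigma> ` ball G r w = ball H r (\<sigma> w)" using Suc by simp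
  have A: "\<sigma> ` {u. \<exists>z\<in>ball G r w. adj G z u} = {u. \<exists>z\<in>ball H r (\<sigma> w). adj H z u}"
  proof (intro equalityI subsetI)
    fix u' assume "u' \<in> \<sigma> ` {u. \<exists>z\<in>ball G r w. adj G z u}"
    then obtain u z where u: "u' = \<sigma> u" "z \<in> ball G r w" "adj G z u" by auto
    obtain i where i: "i < deg G z" "fst (conn G (z,i)) = u" using u(3) unfolding adj_def by blast
    have zb: "z \<in> ball G (s + r) v" using ball_trans[OF Suc.prems(1)] u(2) by auto
    have zt: "z \<in> ball G t v" using zb ball_mono[of "s+r" t G v] Suc.prems by auto
    have c: "conn H (\<sigma> z, i) = (\<sigma> u, snd (conn G (z,i)))" using connP[OF zb _ i(1)] Suc.prems i by simp
    have "adj H (\<sigma> z) u'" unfolding adj_def using c i degs[OF zt] u by (intro exI[of _ i]) auto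
    moreover have "\<sigma> z \<in> ball H r (\<sigma> w)" using IH u(2) by blast
    ultimately show "u' \<in> {u. \<exists>z\<in>ball H r (\<sigma> w). adj H z u}" by blast
  next
    fix u' assume "u' \<in> {u. \<exists>z\<in>ball H r (\<sigma> w). adj H z u}"
    then obtain z' where z': "z' \<in> ball H r (\<sigma> w)" "adj H z' u'" by auto
    obtain z where z: "z \<in> ball G r w" "z' = \<sigma> z" using z'(1) IH by blast
    have zb: "z \<in> ball G (s + r) v" using ball_trans[OF Suc.prems(1)] z(1) by auto
    have zt: "z \<in> ball G t v" using zb ball_mono[of "s+r" t G v] Suc.prems by auto
    obtain i where i: "i < deg H z'" "fst (conn H (z',i)) = u'" using z'(2) unfolding adj_def by blast
    have i': "i < deg G z" using i degs[OF zt] z by simp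
    have c: "conn H (\<sigma> z, i) = (\<sigma> (fst (conn G (z,i))), snd (conn G (z,i)))"
      using connP[OF zb _ i'] Suc.prems by simp
    have "u' = \<sigma> (fst (conn G (z,i)))" using c i z by simp
    moreover have "adj G z (fst (conn G (z,i)))" using adj_port[OF i'] .
    ultimately show "u' \<in> \<sigma> ` {u. \<exists>z\<in>ball G r w. adj G z u}" using z by blast
  qed
  show ?case using IH A by (simp add: image_Un)
qed

lemma ballt: "w \<in> ball G s v \<Longrightarrow> r + s \<le> t \<Longrightarrow> ball G r w \<subseteq> ball G t v"
  using ball_trans[of w G s v r] ball_mono[of "s+r" t G v] by auto

lemma nbE_iff:
  assumes w: "w \<in> ball G s v" and rs: "r + s \<le> t" and x: "x \<in> ball G r w" and i: "i < deg G x"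
  shows "(x,i) \<in> nbE G r w \<longleftrightarrow> (\<sigma> x, i) \<in> nbE H r (\<sigma> w)"
proof (cases r)
  case 0 then show ?thesis by (simp add: nbE_def)
next
  case (Suc r')
  have xt: "x \<in> ball G t v" using ballt[OF w rs] x by auto
  have sx: "\<sigma> x \<in> ball H r (\<sigma> w)" using img[OF w rs] x by blast
  have sw: "\<sigma> w \<in> ball H s v'" using img[OF in_ball[of v G 0] , of s] rs sv w
    by (metis add_0_right  image_eqI in_ball le_add2 order_trans ball_mono subsetD) 
  have "\<sigma> w < nv H" using sw ball_nv[OF sH v'] by auto
  have sxn: "\<sigma> x < nv H" using sx ball_nv[OF sH] \<open>\<sigma> w < nv H\<close> by auto
  have xn: "x < nv G" using xt ball_nv[OF sG v] by auto
  have pG: "(x,i) \<in> ports G" using xn i by (simp add: ports_iff)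
  have pH: "(\<sigma> x,i) \<in> ports H" using sxn i degs[OF xt] by (simp add: ports_iff)
  have "s + r' \<le> t - 1" using rs Suc by simp
  hence r'w: "ball G r' w \<subseteq> ball G (t - 1) v" using
    ball_trans[OF w, of r'] ball_mono[of "s + r'" "t - 1" G v] by blast
  have img': "\<sigma> ` ball G r' w = ball H r' (\<sigma> w)" using img[OF w, of r'] rs Suc by simp
  have F1: "x \<in> ball G r' w \<longleftrightarrow> \<sigma> x \<in> ball H r' (\<sigma> w)"
  proof
    assume "x \<in> ball G r' w" then show "\<sigma> x \<in> ball H r' (\<sigma> w)" using img' by blast
  next
    assume "\<sigma> x \<in> ball H r' (\<sigma> w)"
    then obtain y where "y \<in> ball G r' w" "\<sigma> y = \<sigma> x" using img' by (metis imageE)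
    moreover have "y \<in> ball G t v" using \<open>y \<in> ball G r' w\<close> r'w ball_mono[of "t-1" t G v] by auto
    ultimately show "x \<in> ball G r' w" using inj xt by (metis inj_on_def)
  qed
  have F2: "fst (conn G (x,i)) \<in> ball G r' w \<longleftrightarrow> fst (conn H (\<sigma> x,i)) \<in> ball H r' (\<sigma> w)"
  proof
    assume y: "fst (conn G (x,i)) \<in> ball G r' w"
    have "(x,i) \<in> nbE G t v" using pG y r'w Suc rs by (cases t) (auto simp: nbE_def)
    hence "conn H (\<sigma> x, i) = (\<sigma> (fst (conn G (x,i))), snd (conn G (x,i)))" using P xt i by blast
    then show "fst (conn H (\<sigma> x,i)) \<in> ball H r' (\<sigma> w)" using y img' by auto
  next
    assume y': "fst (conn H (\<sigma> x,i)) \<in> ball H r' (\<sigma> w)"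
    then obtain y0 where y0: "y0 \<in> ball G r' w" "\<sigma> y0 = fst (conn H (\<sigma> x,i))" using img' by force
    define j where "j = snd (conn H (\<sigma> x,i))"
    have cH: "conn H (\<sigma> x, i) = (\<sigma> y0, j)" using y0 j_def by (simp add: prod_eq_iff)
    have cHp: "(\<sigma> y0, j) \<in> ports H" using sg_conn_ports[OF sH pH] cH by simp
    have ccH: "conn H (\<sigma> y0, j) = (\<sigma> x, i)" using sg_conn_conn[OF sH pH] cH by simp
    have y0t: "y0 \<in> ball G (t - 1) v" using y0 r'w by auto
    have y0tt: "y0 \<in> ball G t v" using y0t ball_mono[of "t-1" t G v] by auto
    have j: "j < deg G y0" using cHp degs[OF y0tt] by (simp add: ports_iff)
    have "t - 1 < t" using rs Suc by simp
    have cG: "conn H (\<sigma> y0, j) = (\<sigma> (fst (conn G (y0,j))), snd (conn G (y0,j)))"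
      using connP[OF y0t \<open>t - 1 < t\<close> j] .
    have zin: "fst (conn G (y0,j)) \<in> ball G t v"
      using adj_ball[OF y0t adj_port[OF j]] rs Suc by simp
    have "\<sigma> (fst (conn G (y0,j))) = \<sigma> x" "snd (conn G (y0,j)) = i" using cG ccH by auto
    hence "fst (conn G (y0,j)) = x" using inj zin xt by (meson inj_on_def)
    hence "conn G (y0,j) = (x,i)" using \<open>snd (conn G (y0,j)) = i\<close> by (simp add: prod_eq_iff)
    moreover have "(y0,j) \<in> ports G" using y0tt ball_nv[OF sG v] j by (auto simp: ports_iff)
    ultimately have "conn G (x,i) = (y0,j)" using sg_conn_conn[OF sG] by metis
    then show "fst (conn G (x,i)) \<in> ball G r' w" using y0 by simp
  qed
  show ?thesis using pG pH F1 F2 Suc by (simp add: nbE_def)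
qed

lemma restrict:
  assumes w: "w \<in> ball G s v" and rs: "r + s \<le> t"
  shows "nb_iso G (nbhd G r w) H (nbhd H r (\<sigma> w)) \<sigma>"
  unfolding nb_iso_def nbhd_def fst_conv snd_conv
proof (intro conjI ballI allI impI)
  show "bij_betw \<sigma> (ball G r w) (ball H r (\<sigma> w))"
    unfolding bij_betw_def using img[OF w rs] inj_on_subset[OF inj ballt[OF w rs]] by simp
next
  fix x assume x: "x \<in> ball G r w"
  have xt: "x \<in> ball G t v" using ballt[OF w rs] x by auto
  show "deg H (\<sigma> x) = deg G x" using degs[OF xt] .
  fix i assume i: "i < deg G x"
  show "inp H (\<sigma> x, i) = inp G (x, i)" using P xt i by blast
  show "((x, i) \<in> nbE G r w) = ((\<sigma> x, i) \<in> nbE H r (\<sigma> w))" using nbE_iff[OF w rs x i] .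
  assume e: "(x,i) \<in> nbE G r w"
  have "(x,i) \<in> nbE G t v"
  proof (cases r)
    case 0 then show ?thesis using e by (simp add: nbE_def)
  next
    case (Suc r')
    have "s + r' \<le> t - 1" using rs Suc by simp
    hence r'w: "ball G r' w \<subseteq> ball G (t - 1) v" using
      ball_trans[OF w, of r'] ball_mono[of "s + r'" "t - 1" G v] by blast
    show ?thesis using e r'w Suc rs by (cases t) (auto simp: nbE_def)
  qed
  then show "conn H (\<sigma> x, i) = (\<sigma> (fst (conn G (x, i))), snd (conn G (x, i)))" using P xt i by blast
qed

end


lemma nbhd_iso_refl: "nbhd_iso t G v G v"
  unfolding nbhd_iso_def using nb_iso_refl by fastforce

lemma enbhd_iso_refl: "enbhd_iso t G v u G v u"
  unfolding enbhd_iso_def using nb_iso_refl by fastforce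

lemma nbhd_iso_sym: assumes "nbhd_iso t G v H v'" shows "nbhd_iso t H v' G v"
proof -
  obtain \<sigma> where s: "nb_iso G (nbhd G t v) H (nbhd H t v') \<sigma>" "\<sigma> v = v'"
    using assms unfolding nbhd_iso_def by blast
  have "bij_betw \<sigma> (fst (nbhd G t v)) (fst (nbhd H t v'))" using s unfolding nb_iso_def by blast
  hence "inj_on \<sigma> (fst (nbhd G t v))" by (simp add: bij_betw_def)
  hence "inv_into (fst (nbhd G t v)) \<sigma> (\<sigma> v) = v" using in_ball[of v G t]
    by (intro inv_into_f_f) (simp_all add: nbhd_def)
  hence "inv_into (fst (nbhd G t v)) \<sigma> v' = v" using s(2) by simp
  then show ?thesis unfolding nbhd_iso_def using nb_iso_sym[OF s(1) wfN_nbhd] by blast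
qed

lemma nbhd_iso_trans: assumes "nbhd_iso t G v H v'" "nbhd_iso t H v' K v''" shows "nbhd_iso t G v K v''"
proof -
  obtain \<sigma> where s: "nb_iso G (nbhd G t v) H (nbhd H t v') \<sigma>" "\<sigma> v = v'"
    using assms unfolding nbhd_iso_def by blast
  obtain \<tau> where t: "nb_iso H (nbhd H t v') K (nbhd K t v'') \<tau>" "\<tau> v' = v''"
    using assms unfolding nbhd_iso_def by blast
  show ?thesis unfolding nbhd_iso_def using nb_iso_trans[OF s(1) t(1) wfN_nbhd] s(2) t(2) by auto
qed

lemma enbhd_swap: "enbhd G t v u = enbhd G t u v"
  unfolding enbhd_def by auto

lemma enbhd_iso_swap: "enbhd_iso t G v u H v' u' \<longleftrightarrow> enbhd_iso t G u v H u' v'"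
  unfolding enbhd_iso_def using enbhd_swap by metis

lemma enbhd_iso_sym:
  assumes "enbhd_iso t G v u H v' u'" "adj G v u" "adj G u v" "t > 0"
  shows "enbhd_iso t H v' u' G v u"
proof -
  obtain \<sigma> where s: "nb_iso G (enbhd G t v u) H (enbhd H t v' u') \<sigma>" "\<sigma> v = v'" "\<sigma> u = u'"
    using assms unfolding enbhd_iso_def by blast
  have b: "bij_betw \<sigma> (fst (enbhd G t v u)) (fst (enbhd H t v' u'))" using s unfolding nb_iso_def by blast
  obtain k where Suc: "t = Suc k" using assms(4) gr0_implies_Suc by blast
  have "v \<in> ball G t u" "u \<in> ball G t v"
    using assms(2,3) Suc in_ball[of u G k] in_ball[of v G k] by auto
  hence vu: "v \<in> fst (enbhd G t v u)" "u \<in> fst (enbhd G t v u)"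
    using in_ball[of v G t] in_ball[of u G t] by (auto simp: enbhd_def)
  have "inv_into (fst (enbhd G t v u)) \<sigma> v' = v" "inv_into (fst (enbhd G t v u)) \<sigma> u' = u"
    using b s vu by (auto simp: bij_betw_def)
  then show ?thesis unfolding enbhd_iso_def using nb_iso_sym[OF s(1) wfN_enbhd] by blast
qed

lemma enbhd_iso_trans: assumes "enbhd_iso t G v u H v' u'" "enbhd_iso t H v' u' K v'' u''"
  shows "enbhd_iso t G v u K v'' u''"
proof -
  obtain \<sigma> where s: "nb_iso G (enbhd G t v u) H (enbhd H t v' u') \<sigma>" "\<sigma> v = v'" "\<sigma> u = u'"
    using assms unfolding enbhd_iso_def by blast
  obtain \<tau> where t: "nb_iso H (enbhd H t v' u') K (enbhd K t v'' u'') \<tau>" "\<tau> v' = v''" "\<tau> u' = u''"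
    using assms unfolding enbhd_iso_def by blast
  show ?thesis unfolding enbhd_iso_def using nb_iso_trans[OF s(1) t(1) wfN_enbhd] s t by auto
qed

lemma nbhd_iso2_iso: "nbhd_iso2 t G v u H v' u' \<Longrightarrow> nbhd_iso t G v H v'"
  unfolding nbhd_iso2_def nbhd_iso_def by blast

lemma nbhd_iso_deg: "nbhd_iso t G v H v' \<Longrightarrow> deg H v' = deg G v"
  unfolding nbhd_iso_def nb_iso_def nbhd_def using in_ball[of v G t] by auto

lemma nbhd_iso2_port:
  assumes "nbhd_iso2 t H a b K a' b'" "t > 0" "a < nv H" "i < deg H a" "fst (conn H (a,i)) = b"
  shows "i < deg K a' \<and> fst (conn K (a',i)) = b'"
proof -
  obtain \<sigma> where s: "nb_iso H (nbhd H t a) K (nbhd K t a') \<sigma>" "\<sigma> a = a'" "\<sigma> b = b'"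
    using assms unfolding nbhd_iso2_def by blast
  obtain k where Suc: "t = Suc k" using assms(2) gr0_implies_Suc by blast
  have ab: "a \<in> ball H t a" by (rule in_ball)
  have "(a,i) \<in> nbE H t a" using assms Suc in_ball[of a H k] by (auto simp: nbE_def ports_iff)
  then show ?thesis using s ab assms(4,5) unfolding nb_iso_def nbhd_def by auto
qed

lemma enbhd_iso_inp:
  assumes "enbhd_iso t G v u H v' u'" "t > 0" "adj G u v" "i < deg G v"
  shows "inp H (v', i) = inp G (v, i) \<and> deg H v' = deg G v"
proof -
  obtain \<sigma> where s: "nb_iso G (enbhd G t v u) H (enbhd H t v' u') \<sigma>" "\<sigma> v = v'" "\<sigma> u = u'"
    using assms unfolding enbhd_iso_def by blast
  obtain k where Suc: "t = Suc k" using assms(2) gr0_implies_Suc by blast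
  have "v \<in> ball G t u" using assms(3) Suc in_ball[of u G k] by auto
  hence vu: "v \<in> fst (enbhd G t v u)" using in_ball[of v G t] by (auto simp: enbhd_def)
  then show ?thesis using s assms(4) unfolding nb_iso_def by auto
qed

lemma nbhd_iso_inp:
  assumes "nbhd_iso t G v H v'" "i < deg G v"
  shows "inp H (v', i) = inp G (v, i)"
  using assms unfolding nbhd_iso_def nb_iso_def nbhd_def using in_ball[of v G t] by auto


lemma half_simps[simp]:
  "fP (half_problem P) \<Delta> = Pow (fP P \<Delta>)"
  "gP (half_problem P) \<Delta> = {{#Y, Z#} | Y Z. Y \<subseteq> fP P \<Delta> \<and> Z \<subseteq> fP P \<Delta> \<and> all_g P \<Delta> Y Z \<and>
              (\<forall>Y'. Y \<subset> Y' \<and> Y' \<subseteq> fP P \<Delta> \<longrightarrow> \<not> all_g P \<Delta> Y' Z) \<and>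
              (\<forall>Z'. Z \<subset> Z' \<and> Z' \<subseteq> fP P \<Delta> \<longrightarrow> \<not> all_g P \<Delta> Y Z')}"
  "hP (half_problem P) \<Delta> = {mset Ys | Ys. length Ys \<le> \<Delta> \<and> set Ys \<subseteq> Pow (fP P \<Delta>) \<and>
              (\<exists>ys. list_all2 (\<in>) ys Ys \<and> mset ys \<in> hP P \<Delta>)}"
  by (simp_all add: half_problem_def)

lemma one_simps[simp]:
  "fP (one_problem P) \<Delta> = Pow (Pow (fP P \<Delta>))"
  "gP (one_problem P) \<Delta> = {{#Y, Z#} | Y Z. Y \<subseteq> Pow (fP P \<Delta>) \<and> Z \<subseteq> Pow (fP P \<Delta>) \<and>
              (\<exists>y\<in>Y. \<exists>z\<in>Z. {#y, z#} \<in> gP (half_problem P) \<Delta>)}"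
  "hP (one_problem P) \<Delta> = {mset Ys | Ys. length Ys \<le> \<Delta> \<and> set Ys \<subseteq> Pow (Pow (fP P \<Delta>)) \<and> all_h (half_problem P) \<Delta> Ys \<and>
              (\<forall>j < length Ys. \<forall>Y'. Ys ! j \<subset> Y' \<and> Y' \<subseteq> Pow (fP P \<Delta>) \<longrightarrow>
                  \<not> all_h (half_problem P) \<Delta> (Ys[j := Y']))}"
  by (simp_all add: one_problem_def Let_def)

lemma all_g_sym: "all_g P \<Delta> Y Z \<Longrightarrow> all_g P \<Delta> Z Y"
  unfolding all_g_def by (metis add_mset_commute)

lemma doubleton_eq: "{#a, b#} = {#c, d#} \<Longrightarrow> (a = c \<and> b = d) \<or> (a = d \<and> b = c)"
  by (auto simp: add_eq_conv_diff split: if_splits)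

lemma gP_half_all_g: assumes "{#Y, Z#} \<in> gP (half_problem P) \<Delta>" shows "all_g P \<Delta> Y Z"
proof -
  obtain Y0 Z0 where "{#Y, Z#} = {#Y0, Z0#}" "all_g P \<Delta> Y0 Z0"
    using assms unfolding half_simps mem_Collect_eq by (elim exE conjE)
  then show ?thesis using doubleton_eq[of Y Z Y0 Z0] all_g_sym by blast
qed

lemma list_all2_reorder_right:
  assumes "list_all2 R ys Bs" "mset As = mset Bs"
  shows "\<exists>xs. list_all2 R xs As \<and> mset xs = mset ys"
proof -
  have "list_all2 (\<lambda>a b. R b a) Bs ys" using assms(1) by (simp add: list_all2_conv_all_nth)
  then obtain xs where "list_all2 (\<lambda>a b. R b a) As xs" "mset xs = mset ys"
    using list_all2_reorder_left_invariance[OF _ assms(2)] by blast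
  then show ?thesis by (auto simp: list_all2_conv_all_nth)
qed

lemma all_h_perm: "mset Xs = mset Ys \<Longrightarrow> all_h Q \<Delta> Ys \<Longrightarrow> all_h Q \<Delta> Xs"
  unfolding all_h_def
proof (intro allI impI)
  fix ys assume m: "mset Xs = mset Ys" and h: "\<forall>ys. list_all2 (\<in>) ys Ys \<longrightarrow> mset ys \<in> hP Q \<Delta>"
    and l: "list_all2 (\<in>) ys Xs"
  obtain zs where "list_all2 (\<in>) zs Ys" "mset zs = mset ys"
    using list_all2_reorder_right[OF l m[symmetric]] by blast
  then show "mset ys \<in> hP Q \<Delta>" using h by metis
qed

definition mx :: "'o problem \<Rightarrow> nat \<Rightarrow> 'o set \<Rightarrow> 'o set \<Rightarrow> 'o set" where
  "mx P \<Delta> X Z = (SOME X'. X \<subseteq> X' \<and> X' \<subseteq> fP P \<Delta> \<and> all_g P \<Delta> X' Z \<and>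
       (\<forall>Y. X' \<subset> Y \<and> Y \<subseteq> fP P \<Delta> \<longrightarrow> \<not> all_g P \<Delta> Y Z))"

lemma mx_ex:
  assumes "finite (fP P \<Delta>)" "X \<subseteq> fP P \<Delta>" "all_g P \<Delta> X Z"
  shows "\<exists>X'. X \<subseteq> X' \<and> X' \<subseteq> fP P \<Delta> \<and> all_g P \<Delta> X' Z \<and>
       (\<forall>Y. X' \<subset> Y \<and> Y \<subseteq> fP P \<Delta> \<longrightarrow> \<not> all_g P \<Delta> Y Z)"
proof -
  let ?M = "{X'. X \<subseteq> X' \<and> X' \<subseteq> fP P \<Delta> \<and> all_g P \<Delta> X' Z}"
  have "?M \<subseteq> Pow (fP P \<Delta>)" by blast
  moreover have "finite (Pow (fP P \<Delta>))" using assms(1) by simp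
  ultimately have "finite ?M" by (rule finite_subset)
  moreover have "X \<in> ?M" using assms by simp
  ultimately have "\<exists>m\<in>?M. \<forall>b\<in>?M. m \<le> b \<longrightarrow> m = b" by (intro finite_has_maximal) auto
  then obtain m where m: "m \<in> ?M" and mm0: "\<forall>b\<in>?M. m \<le> b \<longrightarrow> m = b" by (elim bexE)
  have mm: "\<And>b. b \<in> ?M \<Longrightarrow> m \<le> b \<Longrightarrow> m = b" using mm0 by simp
  show ?thesis
  proof (rule exI[of _ m], intro conjI allI impI)
    show "X \<subseteq> m" "m \<subseteq> fP P \<Delta>" "all_g P \<Delta> m Z" using m by simp_all
    fix Y assume Y: "m \<subset> Y \<and> Y \<subseteq> fP P \<Delta>"
    show "\<not> all_g P \<Delta> Y Z"
    proof
      assume "all_g P \<Delta> Y Z"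
      moreover have "X \<subseteq> Y" using m Y by blast
      ultimately have "Y \<in> ?M" using Y by simp
      then have "m = Y" using mm Y by blast
      then show False using Y by blast
    qed
  qed
qed

lemma mx_props:
  assumes "finite (fP P \<Delta>)" "X \<subseteq> fP P \<Delta>" "all_g P \<Delta> X Z"
  shows "X \<subseteq> mx P \<Delta> X Z \<and> mx P \<Delta> X Z \<subseteq> fP P \<Delta> \<and> all_g P \<Delta> (mx P \<Delta> X Z) Z \<and>
       (\<forall>Y. mx P \<Delta> X Z \<subset> Y \<and> Y \<subseteq> fP P \<Delta> \<longrightarrow> \<not> all_g P \<Delta> Y Z)"
proof -
  have "\<exists>X'. X \<subseteq> X' \<and> X' \<subseteq> fP P \<Delta> \<and> all_g P \<Delta> X' Z \<and>
       (\<forall>Y. X' \<subset> Y \<and> Y \<subseteq> fP P \<Delta> \<longrightarrow> \<not> all_g P \<Delta> Y Z)" by (rule mx_ex[OF assms])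
  then show ?thesis unfolding mx_def by (rule someI_ex)
qed

definition EE :: "'o problem \<Rightarrow> nat \<Rightarrow> 'o set \<Rightarrow> 'o set \<Rightarrow> 'o set \<times> 'o set" where
  "EE P \<Delta> X Z = (mx P \<Delta> X Z, mx P \<Delta> Z (mx P \<Delta> X Z))"

lemma all_g_mono: "all_g P \<Delta> Y Z \<Longrightarrow> Y' \<subseteq> Y \<Longrightarrow> Z' \<subseteq> Z \<Longrightarrow> all_g P \<Delta> Y' Z'"
  unfolding all_g_def by blast

lemma EE_props:
  assumes f: "finite (fP P \<Delta>)" and X: "X \<subseteq> fP P \<Delta>" and Z: "Z \<subseteq> fP P \<Delta>" and g: "all_g P \<Delta> X Z"
  shows "X \<subseteq> fst (EE P \<Delta> X Z)" "Z \<subseteq> snd (EE P \<Delta> X Z)"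
    "{#fst (EE P \<Delta> X Z), snd (EE P \<Delta> X Z)#} \<in> gP (half_problem P) \<Delta>"
proof -
  define X' where "X' = mx P \<Delta> X Z"
  define Z' where "Z' = mx P \<Delta> Z X'"
  have A: "X \<subseteq> X' \<and> X' \<subseteq> fP P \<Delta> \<and> all_g P \<Delta> X' Z \<and>
       (\<forall>Y. X' \<subset> Y \<and> Y \<subseteq> fP P \<Delta> \<longrightarrow> \<not> all_g P \<Delta> Y Z)" unfolding X'_def using mx_props[OF f X g] .
  have gZX: "all_g P \<Delta> Z X'" by (rule all_g_sym) (use A in simp)
  have B: "Z \<subseteq> Z' \<and> Z' \<subseteq> fP P \<Delta> \<and> all_g P \<Delta> Z' X' \<and>
       (\<forall>Y. Z' \<subset> Y \<and> Y \<subseteq> fP P \<Delta> \<longrightarrow> \<not> all_g P \<Delta> Y X')" unfolding Z'_def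
    using mx_props[OF f Z gZX] .
  have e: "EE P \<Delta> X Z = (X', Z')" unfolding EE_def X'_def Z'_def by simp
  show "X \<subseteq> fst (EE P \<Delta> X Z)" "Z \<subseteq> snd (EE P \<Delta> X Z)" using A B e by auto
  have c1: "all_g P \<Delta> X' Z'" by (rule all_g_sym) (use B in simp)
  have c2: "\<forall>Y'. X' \<subset> Y' \<and> Y' \<subseteq> fP P \<Delta> \<longrightarrow> \<not> all_g P \<Delta> Y' Z'"
  proof (intro allI impI notI)
    fix Y' assume Y': "X' \<subset> Y' \<and> Y' \<subseteq> fP P \<Delta>" and gg: "all_g P \<Delta> Y' Z'"
    have "all_g P \<Delta> Y' Z" using all_g_mono[OF gg order_refl] B by blast
    then show False using A Y' by blast
  qed
  have c3: "\<forall>Y'. Z' \<subset> Y' \<and> Y' \<subseteq> fP P \<Delta> \<longrightarrow> \<not> all_g P \<Delta> X' Y'"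
  proof (intro allI impI notI)
    fix Y' assume Y': "Z' \<subset> Y' \<and> Y' \<subseteq> fP P \<Delta>" and gg: "all_g P \<Delta> X' Y'"
    have "all_g P \<Delta> Y' X'" using all_g_sym[OF gg] .
    then show False using B Y' by blast
  qed
  have x1: "X' \<subseteq> fP P \<Delta>" and z1: "Z' \<subseteq> fP P \<Delta>" using A B by simp_all
  have "{#X', Z'#} \<in> gP (half_problem P) \<Delta>"
    unfolding half_simps mem_Collect_eq
    apply (rule exI[of _ X'], rule exI[of _ Z'])
    using x1 z1 c1 c2 c3 by simp
  then show "{#fst (EE P \<Delta> X Z), snd (EE P \<Delta> X Z)#} \<in> gP (half_problem P) \<Delta>"
    using e by simp
qed

definition EL :: "'o problem \<Rightarrow> nat \<Rightarrow> 'o set set list \<Rightarrow> 'o set set list" where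
  "EL P \<Delta> L = (SOME L'. length L' = length L \<and> (\<forall>k<length L. L!k \<subseteq> L'!k) \<and>
      set L' \<subseteq> Pow (Pow (fP P \<Delta>)) \<and> all_h (half_problem P) \<Delta> L' \<and>
      (\<forall>j < length L'. \<forall>Y'. L' ! j \<subset> Y' \<and> Y' \<subseteq> Pow (fP P \<Delta>) \<longrightarrow>
                  \<not> all_h (half_problem P) \<Delta> (L'[j := Y'])))"

lemma EL_ex:
  assumes f: "finite (fP P \<Delta>)" and L: "set L \<subseteq> Pow (Pow (fP P \<Delta>))" and h: "all_h (half_problem P) \<Delta> L"
  shows "\<exists>L'. length L' = length L \<and> (\<forall>k<length L. L!k \<subseteq> L'!k) \<and>
      set L' \<subseteq> Pow (Pow (fP P \<Delta>)) \<and> all_h (half_problem P) \<Delta> L' \<and>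
      (\<forall>j < length L'. \<forall>Y'. L' ! j \<subset> Y' \<and> Y' \<subseteq> Pow (fP P \<Delta>) \<longrightarrow>
                  \<not> all_h (half_problem P) \<Delta> (L'[j := Y']))"
proof -
  let ?F = "Pow (Pow (fP P \<Delta>))"
  let ?M = "{L'. length L' = length L \<and> (\<forall>k<length L. L!k \<subseteq> L'!k) \<and>
      set L' \<subseteq> ?F \<and> all_h (half_problem P) \<Delta> L'}"
  let ?f = "\<lambda>L'. \<Sum>k<length L. card (L'!k)"
  have fF: "finite ?F" using f by simp
  have "?M \<subseteq> {xs. set xs \<subseteq> ?F \<and> length xs = length L}" by blast
  hence "finite ?M" using finite_lists_length_eq[OF fF, of "length L"] by (rule finite_subset)
  moreover have "L \<in> ?M" using L h by simp
  ultimately have fin: "finite (?f ` ?M)" and ne: "?f ` ?M \<noteq> {}" by (blast intro: finite_imageI)+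
  obtain m where m: "m \<in> ?M" "?f m = Max (?f ` ?M)" using Max_in[OF fin ne] by auto
  have mx: "\<And>x. x \<in> ?M \<Longrightarrow> ?f x \<le> ?f m" using Max_ge[OF fin] m(2) by auto
  show ?thesis
  proof (rule exI[of _ m], intro conjI allI impI)
    show "length m = length L" "set m \<subseteq> ?F" "all_h (half_problem P) \<Delta> m" using m by auto
    show "\<And>k. k < length L \<Longrightarrow> L ! k \<subseteq> m ! k" using m by auto
    fix j Y' assume j: "j < length m" and Y': "m ! j \<subset> Y' \<and> Y' \<subseteq> Pow (fP P \<Delta>)"
    show "\<not> all_h (half_problem P) \<Delta> (m[j := Y'])"
    proof
      assume a: "all_h (half_problem P) \<Delta> (m[j := Y'])"
      have lm: "length m = length L" using m by auto
      have "set (m[j := Y']) \<subseteq> insert Y' (set m)" by (rule set_update_subset_insert)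
      moreover have "Y' \<in> ?F" using Y' by simp
      moreover have "set m \<subseteq> ?F" using m by simp
      ultimately have s1: "set (m[j := Y']) \<subseteq> ?F" by blast
      have s2: "\<forall>k<length L. L!k \<subseteq> m[j := Y']!k"
      proof (intro allI impI)
        fix k assume k: "k < length L"
        show "L!k \<subseteq> m[j := Y']!k"
        proof (cases "k = j")
          case True
          have "L!k \<subseteq> m!k" using m k by auto
          then show ?thesis using True Y' j by auto
        next
          case False then show ?thesis using m k by auto
        qed
      qed
      have "m[j := Y'] \<in> ?M" using s1 s2 a lm by simp
      hence le: "?f (m[j := Y']) \<le> ?f m" by (rule mx)
      have "finite (Pow (fP P \<Delta>))" using f by simp
      hence fY: "finite Y'" using Y' finite_subset by blast
      have cl: "card (m!j) < card Y'" using Y' fY psubset_card_mono by blast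
      have jL: "j \<in> {..<length L}" using j lm by simp
      have "?f m = card (m!j) + (\<Sum>k\<in>{..<length L} - {j}. card (m!k))"
        by (rule sum.remove[OF _ jL]) simp
      moreover have "?f (m[j := Y']) = card (m[j := Y']!j) + (\<Sum>k\<in>{..<length L} - {j}. card (m[j := Y']!k))"
        by (rule sum.remove[OF _ jL]) simp
      moreover have "(\<Sum>k\<in>{..<length L} - {j}. card (m[j := Y']!k)) = (\<Sum>k\<in>{..<length L} - {j}. card (m!k))"
        by (rule sum.cong) auto
      moreover have "card (m[j := Y']!j) = card Y'" using j by simp
      ultimately show False using le cl by simp
    qed
  qed
qed

lemma EL_props:
  assumes "finite (fP P \<Delta>)" "set L \<subseteq> Pow (Pow (fP P \<Delta>))" "all_h (half_problem P) \<Delta> L"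
  shows "length (EL P \<Delta> L) = length L \<and> (\<forall>k<length L. L!k \<subseteq> EL P \<Delta> L!k) \<and>
      set (EL P \<Delta> L) \<subseteq> Pow (Pow (fP P \<Delta>)) \<and> all_h (half_problem P) \<Delta> (EL P \<Delta> L) \<and>
      (\<forall>j < length (EL P \<Delta> L). \<forall>Y'. EL P \<Delta> L ! j \<subset> Y' \<and> Y' \<subseteq> Pow (fP P \<Delta>) \<longrightarrow>
                  \<not> all_h (half_problem P) \<Delta> ((EL P \<Delta> L)[j := Y']))"
  unfolding EL_def by (rule someI_ex[OF EL_ex[OF assms]])


locale setting =
  fixes P :: "'o problem" and C :: "'l pgraph set" and ori :: "'l \<Rightarrow> bool" and \<Delta> t :: nat
  assumes wf: "problem_wf P"
    and cls: "\<forall>G\<in>C. simple_connected_pgraph G \<and> max_degree G \<Delta>"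
    and orient: "\<forall>G\<in>C. \<forall>p\<in>ports G. ori (inp G p) \<noteq> ori (inp G (conn G p))"
    and tpos: "t > 0"
    and indep: "t_independent C t"
begin

lemma fin: "finite (fP P \<Delta>)" using wf unfolding problem_wf_def by blast
lemma sg: "G \<in> C \<Longrightarrow> simple_connected_pgraph G" using cls by blast
lemma degle: "G \<in> C \<Longrightarrow> v < nv G \<Longrightarrow> deg G v \<le> \<Delta>" using cls unfolding max_degree_def by blast

lemma port_facts:
  assumes G: "G \<in> C" and v: "v < nv G" and k: "k < deg G v"
  shows "fst (conn G (v,k)) < nv G" "snd (conn G (v,k)) < deg G (fst (conn G (v,k)))"
    "conn G (fst (conn G (v,k)), snd (conn G (v,k))) = (v,k)"
    "ori (inp G (v,k)) \<noteq> ori (inp G (fst (conn G (v,k)), snd (conn G (v,k))))"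
    "adj G v (fst (conn G (v,k)))" "adj G (fst (conn G (v,k))) v"
proof -
  have p: "(v,k) \<in> ports G" using v k by (simp add: ports_iff)
  have c: "conn G (v,k) \<in> ports G" using sg_conn_ports[OF sg[OF G] p] .
  then show "fst (conn G (v,k)) < nv G" "snd (conn G (v,k)) < deg G (fst (conn G (v,k)))"
    by (auto simp: ports_def)
  show "conn G (fst (conn G (v,k)), snd (conn G (v,k))) = (v,k)" using sg_conn_conn[OF sg[OF G] p] by simp
  show "ori (inp G (v,k)) \<noteq> ori (inp G (fst (conn G (v,k)), snd (conn G (v,k))))"
  proof -
    have "\<forall>p\<in>ports G. ori (inp G p) \<noteq> ori (inp G (conn G p))" using orient G by blast
    hence "ori (inp G (v,k)) \<noteq> ori (inp G (conn G (v,k)))" using p by blast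
    then show ?thesis by simp
  qed
  show "adj G v (fst (conn G (v,k)))" using adj_port[OF k] .
  then show "adj G (fst (conn G (v,k))) v" using adj_sym[OF sg[OF G] v] by blast
qed

section \<open>Direction (2) implies (1)\<close>

definition pc :: "'o set set \<Rightarrow> 'o set set \<Rightarrow> 'o set \<times> 'o set" where
  "pc X Z = (SOME yz. fst yz \<in> X \<and> snd yz \<in> Z \<and> {#fst yz, snd yz#} \<in> gP (half_problem P) \<Delta>)"

lemma pc_props:
  assumes "{#X, Z#} \<in> gP (one_problem P) \<Delta>"
  shows "fst (pc X Z) \<in> X \<and> snd (pc X Z) \<in> Z \<and> {#fst (pc X Z), snd (pc X Z)#} \<in> gP (half_problem P) \<Delta>"
proof -
  obtain Y W where e: "{#X, Z#} = {#Y, W#}" and ex: "\<exists>y\<in>Y. \<exists>z\<in>W. {#y, z#} \<in> gP (half_problem P) \<Delta>"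
    using assms unfolding one_simps mem_Collect_eq by (elim exE conjE)
  have "\<exists>yz. fst yz \<in> X \<and> snd yz \<in> Z \<and> {#fst yz, snd yz#} \<in> gP (half_problem P) \<Delta>"
  proof (cases "X = Y \<and> Z = W")
    case True
    then obtain y z where "y \<in> X" "z \<in> Z" "{#y, z#} \<in> gP (half_problem P) \<Delta>" using ex by blast
    then show ?thesis by (intro exI[of _ "(y,z)"]) simp
  next
    case False
    hence "X = W \<and> Z = Y" using doubleton_eq[OF e] by blast
    then obtain y z where "y \<in> Z" "z \<in> X" "{#y, z#} \<in> gP (half_problem P) \<Delta>" using ex by blast
    moreover have "{#y, z#} = {#z, y#}" by (simp add: add_mset_commute)
    ultimately show ?thesis by (intro exI[of _ "(z,y)"]) simp
  qed
  then show ?thesis unfolding pc_def by (rule someI_ex)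
qed

definition yv :: "('l pgraph \<Rightarrow> nat \<Rightarrow> nat \<Rightarrow> 'o set set) \<Rightarrow> 'l pgraph \<Rightarrow> nat \<Rightarrow> nat \<Rightarrow> 'o set" where
  "yv A' G v k = (let u = fst (conn G (v,k)); j = snd (conn G (v,k)) in
     if ori (inp G (v,k)) then fst (pc (A' G v k) (A' G u j)) else snd (pc (A' G u j) (A' G v k)))"

definition xsv :: "('l pgraph \<Rightarrow> nat \<Rightarrow> nat \<Rightarrow> 'o set set) \<Rightarrow> 'l pgraph \<Rightarrow> nat \<Rightarrow> 'o list" where
  "xsv A' G v = (SOME xs. list_all2 (\<in>) xs (map (yv A' G v) [0..<deg G v]) \<and> mset xs \<in> hP P \<Delta>)"

definition Alg :: "('l pgraph \<Rightarrow> nat \<Rightarrow> nat \<Rightarrow> 'o set set) \<Rightarrow> 'l pgraph \<Rightarrow> nat \<Rightarrow> nat \<Rightarrow> 'o" where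
  "Alg A' G v k = xsv A' G v ! k"

context
  fixes A' :: "'l pgraph \<Rightarrow> nat \<Rightarrow> nat \<Rightarrow> 'o set set"
  assumes rA: "t_round_alg C (t-1) A'" and sA: "solves C \<Delta> (one_problem P) A'"
begin

lemma edgeA: assumes "G \<in> C" "v < nv G" "k < deg G v"
  shows "{#A' G v k, A' G (fst (conn G (v,k))) (snd (conn G (v,k)))#} \<in> gP (one_problem P) \<Delta>"
    "A' G v k \<in> fP (one_problem P) \<Delta>"
proof -
  have "\<forall>i<deg G v. A' G v i \<in> fP (one_problem P) \<Delta> \<and>
         {#A' G v i, A' G (fst (conn G (v,i))) (snd (conn G (v,i)))#} \<in> gP (one_problem P) \<Delta>"
    using sA assms(1,2) unfolding solves_def by blast
  then show "{#A' G v k, A' G (fst (conn G (v,k))) (snd (conn G (v,k)))#} \<in> gP (one_problem P) \<Delta>"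
    "A' G v k \<in> fP (one_problem P) \<Delta>" using assms(3) by blast+
qed

lemma yv_in: assumes G: "G \<in> C" and v: "v < nv G" and k: "k < deg G v"
  shows "yv A' G v k \<in> A' G v k"
proof -
  let ?u = "fst (conn G (v,k))" and ?j = "snd (conn G (v,k))"
  have e: "{#A' G v k, A' G ?u ?j#} \<in> gP (one_problem P) \<Delta>" using edgeA[OF G v k] by blast
  have e2: "{#A' G ?u ?j, A' G v k#} \<in> gP (one_problem P) \<Delta>" using e by (simp add: add_mset_commute)
  show ?thesis unfolding yv_def Let_def using pc_props[OF e] pc_props[OF e2] by auto
qed

lemma yv_sub: assumes G: "G \<in> C" and v: "v < nv G" and k: "k < deg G v"
  shows "yv A' G v k \<subseteq> fP P \<Delta>"
  using yv_in[OF assms] edgeA(2)[OF assms] by auto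

lemma xsv_props: assumes G: "G \<in> C" and v: "v < nv G"
  shows "list_all2 (\<in>) (xsv A' G v) (map (yv A' G v) [0..<deg G v]) \<and> mset (xsv A' G v) \<in> hP P \<Delta>"
proof -
  let ?L = "map (A' G v) [0..<deg G v]" and ?Y = "map (yv A' G v) [0..<deg G v]"
  have "mset ?L \<in> hP (one_problem P) \<Delta>" using sA G v unfolding solves_def by blast
  then obtain Ys where Ys: "mset ?L = mset Ys" "all_h (half_problem P) \<Delta> Ys"
    unfolding one_simps mem_Collect_eq by (elim exE conjE)
  have hL: "all_h (half_problem P) \<Delta> ?L" using all_h_perm[OF Ys] .
  have "list_all2 (\<in>) ?Y ?L" using yv_in[OF G v] by (auto simp: list_all2_conv_all_nth)
  hence "mset ?Y \<in> hP (half_problem P) \<Delta>" using hL unfolding all_h_def by blast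
  then obtain Ys2 ys where Y2: "mset ?Y = mset Ys2" "list_all2 (\<in>) ys Ys2" "mset ys \<in> hP P \<Delta>"
    unfolding half_simps mem_Collect_eq by (elim exE conjE)
  obtain xs where "list_all2 (\<in>) xs ?Y" "mset xs = mset ys"
    using list_all2_reorder_right[OF Y2(2) Y2(1)] by blast
  hence "\<exists>xs. list_all2 (\<in>) xs ?Y \<and> mset xs \<in> hP P \<Delta>" using Y2(3) by metis
  then show ?thesis unfolding xsv_def by (rule someI_ex)
qed

lemma Alg_in: assumes G: "G \<in> C" and v: "v < nv G" and k: "k < deg G v"
  shows "Alg A' G v k \<in> yv A' G v k"
  using xsv_props[OF G v] k unfolding Alg_def by (auto simp: list_all2_conv_all_nth)

lemma yv_edge: assumes G: "G \<in> C" and v: "v < nv G" and k: "k < deg G v"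
  shows "{#yv A' G v k, yv A' G (fst (conn G (v,k))) (snd (conn G (v,k)))#} \<in> gP (half_problem P) \<Delta>"
proof -
  let ?u = "fst (conn G (v,k))" and ?j = "snd (conn G (v,k))"
  note pf = port_facts[OF G v k]
  have e: "{#A' G v k, A' G ?u ?j#} \<in> gP (one_problem P) \<Delta>" using edgeA[OF G v k] by blast
  have e2: "{#A' G ?u ?j, A' G v k#} \<in> gP (one_problem P) \<Delta>" using e by (simp add: add_mset_commute)
  have cu: "fst (conn G (?u, ?j)) = v" "snd (conn G (?u, ?j)) = k" using pf(3) by simp_all
  show ?thesis
  proof (cases "ori (inp G (v,k))")
    case True
    hence "\<not> ori (inp G (?u,?j))" using pf(4) by blast
    then show ?thesis using True pc_props[OF e] cu unfolding yv_def Let_def by simp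
  next
    case False
    hence o: "ori (inp G (?u,?j))" using pf(4) by blast
    have "yv A' G v k = snd (pc (A' G ?u ?j) (A' G v k))" using False unfolding yv_def Let_def by simp
    moreover have "yv A' G ?u ?j = fst (pc (A' G ?u ?j) (A' G v k))" using o cu unfolding yv_def Let_def by simp
    ultimately show ?thesis using pc_props[OF e2] by (simp add: add_mset_commute)
  qed
qed

lemma Alg_solves: "solves C \<Delta> P (Alg A')"
  unfolding solves_def
proof (intro ballI allI impI conjI)
  fix G v assume G: "G \<in> C" and v: "v < nv G"
  {
    fix k assume k: "k < deg G v"
    show "Alg A' G v k \<in> fP P \<Delta>" using Alg_in[OF G v k] yv_sub[OF G v k] by blast
    let ?u = "fst (conn G (v,k))" and ?j = "snd (conn G (v,k))"
    note pf = port_facts[OF G v k]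
    have g: "all_g P \<Delta> (yv A' G v k) (yv A' G ?u ?j)" using gP_half_all_g[OF yv_edge[OF G v k]] .
    show "{#Alg A' G v k, Alg A' G ?u ?j#} \<in> gP P \<Delta>"
    proof -
      have "\<forall>y\<in>yv A' G v k. \<forall>z\<in>yv A' G ?u ?j. {#y, z#} \<in> gP P \<Delta>" using g by (simp add: all_g_def)
      then show ?thesis using Alg_in[OF G v k] Alg_in[OF G pf(1) pf(2)] by blast
    qed
  }
  have "list_all2 (\<in>) (xsv A' G v) (map (yv A' G v) [0..<deg G v])" using xsv_props[OF G v] by blast
  hence l: "length (xsv A' G v) = deg G v" by (simp add: list_all2_lengthD)
  have "map (Alg A' G v) [0..<deg G v] = xsv A' G v"
    unfolding Alg_def using map_nth[of "xsv A' G v"] l by simp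
  then show "mset (map (Alg A' G v) [0..<deg G v]) \<in> hP P \<Delta>" using xsv_props[OF G v] by simp
qed

lemma Alg_round: "t_round_alg C t (Alg A')"
  unfolding t_round_alg_def
proof (intro ballI allI impI)
  fix G H v v' i assume G: "G \<in> C" and H: "H \<in> C" and v: "v < nv G" and v': "v' < nv H"
    and hiso: "nbhd_iso t G v H v'" and i: "i < deg G v"
  obtain \<sigma> where s: "nb_iso G (nbhd G t v) H (nbhd H t v') \<sigma>" "\<sigma> v = v'"
    using hiso unfolding nbhd_iso_def by blast
  interpret isoctx G H t v v' \<sigma> using sg[OF G] sg[OF H] v v' s by unfold_locales
  have dg: "deg H v' = deg G v" using nbhd_iso_deg[OF hiso] .
  have yeq: "yv A' G v k = yv A' H v' k" if k: "k < deg G v" for k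
  proof -
    let ?u = "fst (conn G (v,k))" and ?j = "snd (conn G (v,k))"
    note pf = port_facts[OF G v k]
    have i1: "nbhd_iso (t-1) G v H v'" unfolding nbhd_iso_def
      using restrict[OF in_ball[of v G 0], of "t-1"] s(2) by auto
    have "\<forall>i<deg G v. A' G v i = A' H v' i" using rA G H v v' i1 unfolding t_round_alg_def by blast
    hence a1: "A' G v k = A' H v' k" using k by blast
    have c: "conn H (v', k) = (\<sigma> ?u, ?j)" using connP[of v 0 k] in_ball[of v G 0] tpos k s(2) by simp
    have ub: "?u \<in> ball G 1 v" using adj_ball[OF in_ball[of v G 0] pf(5)] by simp
    have i2: "nbhd_iso (t-1) G ?u H (\<sigma> ?u)" unfolding nbhd_iso_def
      using restrict[OF ub, of "t-1"] tpos by (intro exI[of _ \<sigma>]) simp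
    have pH: "(v',k) \<in> ports H" using v' k dg by (simp add: ports_iff)
    have "\<sigma> ?u < nv H" using sg_conn_ports[OF sg[OF H] pH] c by (simp add: ports_def)
    hence "\<forall>i<deg G ?u. A' G ?u i = A' H (\<sigma> ?u) i" using rA G H pf(1) i2 unfolding t_round_alg_def by blast
    hence a2: "A' G ?u ?j = A' H (\<sigma> ?u) ?j" using pf(2) by blast
    have ip: "inp H (v',k) = inp G (v,k)" using nbhd_iso_inp[OF hiso k] .
    show ?thesis unfolding yv_def Let_def using a1 a2 c ip by simp
  qed
  have m: "map (yv A' G v) [0..<deg G v] = map (yv A' H v') [0..<deg H v']"
    using dg yeq by simp
  have "xsv A' G v = xsv A' H v'" unfolding xsv_def by (simp only: m)
  then show "Alg A' G v i = Alg A' H v' i" unfolding Alg_def by simp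
qed

end

lemma dir21:
  assumes "t_round_alg C (t-1) A'" "solves C \<Delta> (one_problem P) A'"
  shows "\<exists>A. t_round_alg C t A \<and> solves C \<Delta> P A"
  using Alg_round[OF assms] Alg_solves[OF assms] by blast

end


context setting
begin

lemma indep_i:
  assumes G: "G \<in> C" and p: "p \<in> ports G" and H1: "H1 \<in> C" and p1: "p1 \<in> ports H1"
    and H2: "H2 \<in> C" and p2: "p2 \<in> ports H2"
    and e1: "enbhd_iso t H1 (fst p1) (fst (conn H1 p1)) G (fst p) (fst (conn G p))"
    and e2: "enbhd_iso t H2 (fst p2) (fst (conn H2 p2)) G (fst p) (fst (conn G p))"
  shows "\<exists>H\<in>C. \<exists>q\<in>ports H. enbhd_iso t H (fst q) (fst (conn H q)) G (fst p) (fst (conn G p)) \<and>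
     nbhd_iso2 t H (fst q) (fst (conn H q)) H1 (fst p1) (fst (conn H1 p1)) \<and>
     nbhd_iso2 t H (fst (conn H q)) (fst q) H2 (fst (conn H2 p2)) (fst p2)"
proof -
  have "\<forall>G\<in>C. \<forall>p\<in>ports G. (\<forall>H1\<in>C. \<forall>p1\<in>ports H1. \<forall>H2\<in>C. \<forall>p2\<in>ports H2.
         enbhd_iso t H1 (fst p1) (fst (conn H1 p1)) G (fst p) (fst (conn G p)) \<longrightarrow>
         enbhd_iso t H2 (fst p2) (fst (conn H2 p2)) G (fst p) (fst (conn G p)) \<longrightarrow>
         (\<exists>H\<in>C. \<exists>q\<in>ports H. enbhd_iso t H (fst q) (fst (conn H q)) G (fst p) (fst (conn G p)) \<and>
     nbhd_iso2 t H (fst q) (fst (conn H q)) H1 (fst p1) (fst (conn H1 p1)) \<and>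
     nbhd_iso2 t H (fst (conn H q)) (fst q) H2 (fst (conn H2 p2)) (fst p2)))"
    using indep unfolding t_independent_def Let_def by blast
  then show ?thesis using assms by blast
qed

lemma indep_ii:
  assumes G: "G \<in> C" and p: "p \<in> ports G"
    and hyp: "\<forall>k < deg G (fst p). Hs k \<in> C \<and> ws k < nv (Hs k) \<and> nbhd_iso (t - 1) (Hs k) (ws k) G (fst p)"
  shows "\<exists>H\<in>C. \<exists>w < nv H. nbhd_iso (t - 1) H w G (fst p) \<and>
           (\<forall>k < deg G (fst p).
              enbhd_iso t H w (fst (conn H (w,k))) (Hs k) (ws k) (fst (conn (Hs k) (ws k, k))))"
proof -
  have "\<forall>G\<in>C. \<forall>p\<in>ports G. (\<forall>Hs ws. (\<forall>k < deg G (fst p). Hs k \<in> C \<and> ws k < nv (Hs k) \<and>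
                 nbhd_iso (t - 1) (Hs k) (ws k) G (fst p)) \<longrightarrow>
        (\<exists>H\<in>C. \<exists>w < nv H. nbhd_iso (t - 1) H w G (fst p) \<and>
           (\<forall>k < deg G (fst p).
              enbhd_iso t H w (fst (conn H (w,k))) (Hs k) (ws k) (fst (conn (Hs k) (ws k, k))))))"
    using indep unfolding t_independent_def Let_def by blast
  then show ?thesis using assms by blast
qed

section \<open>Direction (1) implies (2)\<close>

definition S :: "('l pgraph \<Rightarrow> nat \<Rightarrow> nat \<Rightarrow> 'o) \<Rightarrow> 'l pgraph \<Rightarrow> nat \<Rightarrow> nat \<Rightarrow> 'o set" where
  "S A G v u = {A H1 (fst p1) (snd p1) | H1 p1. H1 \<in> C \<and> p1 \<in> ports H1 \<and>
      enbhd_iso t H1 (fst p1) (fst (conn H1 p1)) G v u}"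

definition B :: "('l pgraph \<Rightarrow> nat \<Rightarrow> nat \<Rightarrow> 'o) \<Rightarrow> 'l pgraph \<Rightarrow> nat \<Rightarrow> nat \<Rightarrow> 'o set" where
  "B A G v k = (let u = fst (conn G (v,k)); X = S A G v u; Z = S A G u v in
     if ori (inp G (v,k)) then fst (EE P \<Delta> X Z) else snd (EE P \<Delta> Z X))"

definition T :: "('l pgraph \<Rightarrow> nat \<Rightarrow> nat \<Rightarrow> 'o) \<Rightarrow> 'l pgraph \<Rightarrow> nat \<Rightarrow> nat \<Rightarrow> 'o set set" where
  "T A G v k = {B A H w k | H w. H \<in> C \<and> w < nv H \<and> nbhd_iso (t-1) H w G v}"

definition Lst :: "('l pgraph \<Rightarrow> nat \<Rightarrow> nat \<Rightarrow> 'o) \<Rightarrow> 'l pgraph \<Rightarrow> nat \<Rightarrow> 'o set set list" where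
  "Lst A G v = map (T A G v) [0..<deg G v]"

definition A1 :: "('l pgraph \<Rightarrow> nat \<Rightarrow> nat \<Rightarrow> 'o) \<Rightarrow> 'l pgraph \<Rightarrow> nat \<Rightarrow> nat \<Rightarrow> 'o set set" where
  "A1 A G v k = EL P \<Delta> (Lst A G v) ! k"

lemma S_inv:
  assumes "enbhd_iso t G v u G' v' u'" "adj G v u" "adj G u v"
  shows "S A G v u = S A G' v' u'"
proof -
  have sy: "enbhd_iso t G' v' u' G v u" using enbhd_iso_sym[OF assms tpos] .
  show ?thesis unfolding S_def
  proof (intro Collect_cong iffI; elim exE conjE)
    fix x H1 p1 assume "x = A H1 (fst p1) (snd p1)" "H1 \<in> C" "p1 \<in> ports H1"
      "enbhd_iso t H1 (fst p1) (fst (conn H1 p1)) G v u"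
    then show "\<exists>H1 p1. x = A H1 (fst p1) (snd p1) \<and> H1 \<in> C \<and> p1 \<in> ports H1 \<and>
      enbhd_iso t H1 (fst p1) (fst (conn H1 p1)) G' v' u'"
      using enbhd_iso_trans[OF _ assms(1)] by blast
  next
    fix x H1 p1 assume "x = A H1 (fst p1) (snd p1)" "H1 \<in> C" "p1 \<in> ports H1"
      "enbhd_iso t H1 (fst p1) (fst (conn H1 p1)) G' v' u'"
    then show "\<exists>H1 p1. x = A H1 (fst p1) (snd p1) \<and> H1 \<in> C \<and> p1 \<in> ports H1 \<and>
      enbhd_iso t H1 (fst p1) (fst (conn H1 p1)) G v u"
      using enbhd_iso_trans[OF _ sy] by blast
  qed
qed

lemma B_inv:
  assumes H: "H \<in> C" and w: "w < nv H" and k: "k < deg H w"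
    and e: "enbhd_iso t H w (fst (conn H (w,k))) H' w' (fst (conn H' (w',k)))"
  shows "B A H w k = B A H' w' k"
proof -
  let ?u = "fst (conn H (w,k))" and ?u' = "fst (conn H' (w',k))"
  note pf = port_facts[OF H w k]
  have s1: "S A H w ?u = S A H' w' ?u'" using S_inv[OF e pf(5,6)] .
  have e2: "enbhd_iso t H ?u w H' ?u' w'" using e enbhd_iso_swap by blast
  have s2: "S A H ?u w = S A H' ?u' w'" using S_inv[OF e2 pf(6,5)] .
  have ip: "inp H' (w',k) = inp H (w,k)" using enbhd_iso_inp[OF e tpos pf(6) k] by blast
  show ?thesis unfolding B_def Let_def using s1 s2 ip by simp
qed

context
  fixes A :: "'l pgraph \<Rightarrow> nat \<Rightarrow> nat \<Rightarrow> 'o"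
  assumes rA: "t_round_alg C t A" and sA: "solves C \<Delta> P A"
begin

lemma solvesA: assumes "G \<in> C" "v < nv G"
  shows "\<forall>i<deg G v. A G v i \<in> fP P \<Delta> \<and>
         {#A G v i, A G (fst (conn G (v,i))) (snd (conn G (v,i)))#} \<in> gP P \<Delta>"
    "mset (map (A G v) [0..<deg G v]) \<in> hP P \<Delta>"
  using sA assms unfolding solves_def by blast+

lemma S_sub: "S A G v u \<subseteq> fP P \<Delta>"
proof
  fix x assume "x \<in> S A G v u"
  then obtain H1 p1 where x: "x = A H1 (fst p1) (snd p1)" "H1 \<in> C" "p1 \<in> ports H1"
    unfolding S_def by blast
  have "fst p1 < nv H1" "snd p1 < deg H1 (fst p1)" using x(3) by (auto simp: ports_def)
  then show "x \<in> fP P \<Delta>" using solvesA(1)[OF x(2)] x(1) by blast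
qed

lemma S_self: assumes "G \<in> C" "v < nv G" "k < deg G v"
  shows "A G v k \<in> S A G v (fst (conn G (v,k)))"
  unfolding S_def using assms enbhd_iso_refl[of t G v "fst (conn G (v,k))"]
  by (intro CollectI exI[of _ G] exI[of _ "(v,k)"]) (simp add: ports_iff)

lemma all_g_S:
  assumes G: "G \<in> C" and v: "v < nv G" and k: "k < deg G v"
  shows "all_g P \<Delta> (S A G v (fst (conn G (v,k)))) (S A G (fst (conn G (v,k))) v)"
  unfolding all_g_def
proof (intro ballI)
  let ?u = "fst (conn G (v,k))"
  have p: "(v,k) \<in> ports G" using v k by (simp add: ports_iff)
  fix y z assume y: "y \<in> S A G v ?u" and z: "z \<in> S A G ?u v"
  obtain H1 p1 where y1: "y = A H1 (fst p1) (snd p1)" "H1 \<in> C" "p1 \<in> ports H1"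
      "enbhd_iso t H1 (fst p1) (fst (conn H1 p1)) G v ?u"
    using y unfolding S_def by blast
  obtain H2 p2' where z1: "z = A H2 (fst p2') (snd p2')" "H2 \<in> C" "p2' \<in> ports H2"
      "enbhd_iso t H2 (fst p2') (fst (conn H2 p2')) G ?u v"
    using z unfolding S_def by blast
  define p2 where "p2 = conn H2 p2'"
  have p2: "p2 \<in> ports H2" using sg_conn_ports[OF sg[OF z1(2)] z1(3)] p2_def by simp
  have cp2: "conn H2 p2 = p2'" using sg_conn_conn[OF sg[OF z1(2)] z1(3)] p2_def by simp
  have e2: "enbhd_iso t H2 (fst p2) (fst (conn H2 p2)) G v ?u"
    using z1(4) cp2 p2_def enbhd_iso_swap by metis
  obtain H q where H: "H \<in> C" and q: "q \<in> ports H"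
    and i1: "nbhd_iso2 t H (fst q) (fst (conn H q)) H1 (fst p1) (fst (conn H1 p1))"
    and i2: "nbhd_iso2 t H (fst (conn H q)) (fst q) H2 (fst (conn H2 p2)) (fst p2)"
    using indep_i[OF G p y1(2) y1(3) z1(2) p2] y1(4) e2 by auto
  obtain v' iq where q': "q = (v', iq)" by (cases q)
  have v': "v' < nv H" "iq < deg H v'" using q q' by (auto simp: ports_def)
  obtain u' jq where cq: "conn H q = (u', jq)" by (cases "conn H q")
  have cqp: "(u', jq) \<in> ports H" using sg_conn_ports[OF sg[OF H] q] cq by simp
  have u': "u' < nv H" "jq < deg H u'" using cqp by (auto simp: ports_def)
  have ccq: "conn H (u', jq) = (v', iq)" using sg_conn_conn[OF sg[OF H] q] cq q' by simp
  have po1: "iq < deg H1 (fst p1) \<and> fst (conn H1 (fst p1, iq)) = fst (conn H1 p1)"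
    using nbhd_iso2_port[OF _ tpos v'(1) v'(2)] i1 q' cq by simp
  have "(fst p1, iq) \<in> ports H1" using po1 y1(3) by (auto simp: ports_def)
  hence "(fst p1, iq) = p1" using sg_uniq[OF sg[OF y1(2)] _ y1(3)] po1 by simp
  hence sp1: "snd p1 = iq" by (metis snd_conv)
  have "\<forall>i<deg H v'. A H v' i = A H1 (fst p1) i"
    using rA H y1(2) v'(1) nbhd_iso2_iso[OF i1] q' y1(3) unfolding t_round_alg_def
    by (simp add: ports_def) (metis (no_types, lifting) fst_conv mem_Collect_eq prod.collapse case_prodD)
  hence ya: "y = A H v' iq" using y1(1) sp1 v'(2) by simp
  have po2: "jq < deg H2 (fst (conn H2 p2)) \<and> fst (conn H2 (fst (conn H2 p2), jq)) = fst p2"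
    using nbhd_iso2_port[OF _ tpos u'(1) u'(2)] i2 cq q' ccq by simp
  have "(fst (conn H2 p2), jq) \<in> ports H2" using po2 cp2 z1(3) by (auto simp: ports_def)
  hence "(fst (conn H2 p2), jq) = p2'" using sg_uniq[OF sg[OF z1(2)] _ z1(3)] po2 cp2 p2_def by simp
  hence sp2: "snd p2' = jq" "fst p2' = fst (conn H2 p2)" by auto
  have fz: "fst (conn H2 p2) < nv H2" using z1(3) cp2 by (auto simp: ports_def)
  have "\<forall>i<deg H u'. A H u' i = A H2 (fst (conn H2 p2)) i"
    using rA H z1(2) u'(1) nbhd_iso2_iso[OF i2] cq fz unfolding t_round_alg_def by simp
  hence za: "z = A H u' jq" using z1(1) sp2 u'(2) by simp
  have "{#A H v' iq, A H (fst (conn H (v',iq))) (snd (conn H (v',iq)))#} \<in> gP P \<Delta>"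
    using solvesA(1)[OF H v'(1)] v'(2) by blast
  then show "{#y, z#} \<in> gP P \<Delta>" using ya za cq q' by simp
qed

lemma B_props:
  assumes G: "G \<in> C" and v: "v < nv G" and k: "k < deg G v"
  shows "A G v k \<in> B A G v k" "B A G v k \<subseteq> fP P \<Delta>"
    "{#B A G v k, B A G (fst (conn G (v,k))) (snd (conn G (v,k)))#} \<in> gP (half_problem P) \<Delta>"
proof -
  let ?u = "fst (conn G (v,k))" and ?j = "snd (conn G (v,k))"
  note pf = port_facts[OF G v k]
  let ?X = "S A G v ?u" and ?Z = "S A G ?u v"
  have g: "all_g P \<Delta> ?X ?Z" using all_g_S[OF G v k] .
  have g': "all_g P \<Delta> ?Z ?X" using all_g_sym[OF g] .
  note E1 = EE_props[OF fin S_sub S_sub g]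
  note E2 = EE_props[OF fin S_sub S_sub g']
  have "fst (EE P \<Delta> ?X ?Z) \<subseteq> fP P \<Delta>" "snd (EE P \<Delta> ?X ?Z) \<subseteq> fP P \<Delta>"
    "fst (EE P \<Delta> ?Z ?X) \<subseteq> fP P \<Delta>" "snd (EE P \<Delta> ?Z ?X) \<subseteq> fP P \<Delta>"
    using E1(3) E2(3) unfolding half_simps mem_Collect_eq
    by (metis doubleton_eq)+
  then show "B A G v k \<subseteq> fP P \<Delta>" unfolding B_def Let_def by simp
  show "A G v k \<in> B A G v k" unfolding B_def Let_def using S_self[OF G v k] E1(1) E2(2) by auto
  have cu: "fst (conn G (?u, ?j)) = v" "snd (conn G (?u, ?j)) = k" using pf(3) by simp_all
  show "{#B A G v k, B A G ?u ?j#} \<in> gP (half_problem P) \<Delta>"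
  proof (cases "ori (inp G (v,k))")
    case True
    hence "\<not> ori (inp G (?u,?j))" using pf(4) by blast
    then show ?thesis using True E1(3) cu unfolding B_def Let_def by simp
  next
    case False
    hence o: "ori (inp G (?u,?j))" using pf(4) by blast
    have "B A G v k = snd (EE P \<Delta> ?Z ?X)" using False unfolding B_def Let_def by simp
    moreover have "B A G ?u ?j = fst (EE P \<Delta> ?Z ?X)" using o cu unfolding B_def Let_def by simp
    ultimately show ?thesis using E2(3) by (simp add: add_mset_commute)
  qed
qed

lemma T_inv: assumes "nbhd_iso (t-1) G v G' v'" shows "T A G v k = T A G' v' k"
proof -
  have sy: "nbhd_iso (t-1) G' v' G v" using nbhd_iso_sym[OF assms] .
  show ?thesis unfolding T_def
    using nbhd_iso_trans[OF _ assms] nbhd_iso_trans[OF _ sy] by blast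
qed

lemma T_self: assumes "G \<in> C" "v < nv G" shows "B A G v k \<in> T A G v k"
  unfolding T_def using assms nbhd_iso_refl by blast

lemma T_sub: assumes k: "k < deg G v" shows "T A G v k \<subseteq> Pow (fP P \<Delta>)"
proof
  fix Y assume "Y \<in> T A G v k"
  then obtain H w where Hw: "Y = B A H w k" "H \<in> C" "w < nv H" "nbhd_iso (t-1) H w G v"
    unfolding T_def by blast
  have "k < deg H w" using nbhd_iso_deg[OF Hw(4)] k by simp
  then show "Y \<in> Pow (fP P \<Delta>)" using B_props(2)[OF Hw(2,3)] Hw(1) by simp
qed

lemma Lst_set: "set (Lst A G v) \<subseteq> Pow (Pow (fP P \<Delta>))"
proof
  fix Y assume "Y \<in> set (Lst A G v)"
  then obtain k where k: "k < deg G v" "Y = T A G v k" unfolding Lst_def by auto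
  then show "Y \<in> Pow (Pow (fP P \<Delta>))" using T_sub[OF k(1)] by simp
qed

lemma Lst_h: assumes G: "G \<in> C" and v: "v < nv G"
  shows "all_h (half_problem P) \<Delta> (Lst A G v)"
  unfolding all_h_def
proof (intro allI impI)
  fix ys assume ys: "list_all2 (\<in>) ys (Lst A G v)"
  let ?d = "deg G v"
  have ly: "length ys = ?d" using ys unfolding Lst_def by (simp add: list_all2_lengthD)
  have yk: "ys ! k \<in> T A G v k" if "k < ?d" for k
    using ys that unfolding Lst_def by (auto simp: list_all2_conv_all_nth)
  have ex: "\<forall>k. \<exists>Hw. k < ?d \<longrightarrow> fst Hw \<in> C \<and> snd Hw < nv (fst Hw) \<and>
     nbhd_iso (t-1) (fst Hw) (snd Hw) G v \<and> ys ! k = B A (fst Hw) (snd Hw) k"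
  proof
    fix k show "\<exists>Hw. k < ?d \<longrightarrow> fst Hw \<in> C \<and> snd Hw < nv (fst Hw) \<and>
     nbhd_iso (t-1) (fst Hw) (snd Hw) G v \<and> ys ! k = B A (fst Hw) (snd Hw) k"
    proof (cases "k < ?d")
      case True
      then obtain H w where "ys ! k = B A H w k" "H \<in> C" "w < nv H" "nbhd_iso (t-1) H w G v"
        using yk[OF True] unfolding T_def by blast
      then show ?thesis by (intro exI[of _ "(H,w)"]) simp
    qed simp
  qed
  then obtain f where f: "\<forall>k. k < ?d \<longrightarrow> fst (f k) \<in> C \<and> snd (f k) < nv (fst (f k)) \<and>
     nbhd_iso (t-1) (fst (f k)) (snd (f k)) G v \<and> ys ! k = B A (fst (f k)) (snd (f k)) k"
    by metis
  have "\<exists>H\<in>C. \<exists>w < nv H. nbhd_iso (t-1) H w G v \<and> (\<forall>k<?d. ys ! k = B A H w k)"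
  proof (cases "?d = 0")
    case True then show ?thesis using G v nbhd_iso_refl[of "t-1" G v] by auto
  next
    case False
    have p: "(v,0) \<in> ports G" using v False by (simp add: ports_iff)
    have hyp: "\<forall>k < deg G (fst (v,0::nat)). fst (f k) \<in> C \<and> snd (f k) < nv (fst (f k)) \<and>
       nbhd_iso (t - 1) (fst (f k)) (snd (f k)) G (fst (v,0::nat))" using f by simp
    obtain H w where H: "H \<in> C" "w < nv H" "nbhd_iso (t - 1) H w G v"
      and ee: "\<forall>k < ?d. enbhd_iso t H w (fst (conn H (w,k))) (fst (f k)) (snd (f k))
                 (fst (conn (fst (f k)) (snd (f k), k)))"
      using indep_ii[OF G p hyp] by auto
    have dH: "deg H w = ?d" using nbhd_iso_deg[OF H(3)] by simp
    have "ys ! k = B A H w k" if k: "k < ?d" for k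
    proof -
      have "B A H w k = B A (fst (f k)) (snd (f k)) k"
        using B_inv[OF H(1,2) _ ee[rule_format, OF k]] k dH by simp
      then show ?thesis using f k by simp
    qed
    then show ?thesis using H by blast
  qed
  then obtain H w where H: "H \<in> C" "w < nv H" "nbhd_iso (t-1) H w G v" and yv: "\<forall>k<?d. ys ! k = B A H w k"
    by blast
  have dH: "deg H w = ?d" using nbhd_iso_deg[OF H(3)] by simp
  have yseq: "ys = map (B A H w) [0..<deg H w]" using ly yv dH by (intro nth_equalityI) auto
  have "length (map (B A H w) [0..<deg H w]) \<le> \<Delta>" using degle[OF H(1,2)] by simp
  moreover have "\<forall>k<deg H w. B A H w k \<in> Pow (fP P \<Delta>)" using B_props(2)[OF H(1,2)] by blast
  hence "set (map (B A H w) [0..<deg H w]) \<subseteq> Pow (fP P \<Delta>)" by auto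
  moreover have "list_all2 (\<in>) (map (A H w) [0..<deg H w]) (map (B A H w) [0..<deg H w])"
    using B_props(1)[OF H(1,2)] by (auto simp: list_all2_conv_all_nth)
  moreover have "mset (map (A H w) [0..<deg H w]) \<in> hP P \<Delta>" using solvesA(2)[OF H(1,2)] .
  ultimately show "mset ys \<in> hP (half_problem P) \<Delta>" unfolding yseq half_simps mem_Collect_eq
    apply (intro exI[of _ "map (B A H w) [0..<deg H w]"] conjI refl)
      apply assumption
     apply assumption
    apply (rule exI[of _ "map (A H w) [0..<deg H w]"])
    by (intro conjI)
qed

lemma EL_Lst: assumes G: "G \<in> C" and v: "v < nv G"
  shows "length (EL P \<Delta> (Lst A G v)) = deg G v \<and> (\<forall>k<deg G v. T A G v k \<subseteq> EL P \<Delta> (Lst A G v)!k) \<and>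
      set (EL P \<Delta> (Lst A G v)) \<subseteq> Pow (Pow (fP P \<Delta>)) \<and> all_h (half_problem P) \<Delta> (EL P \<Delta> (Lst A G v)) \<and>
      (\<forall>j < length (EL P \<Delta> (Lst A G v)). \<forall>Y'. EL P \<Delta> (Lst A G v) ! j \<subset> Y' \<and> Y' \<subseteq> Pow (fP P \<Delta>) \<longrightarrow>
                  \<not> all_h (half_problem P) \<Delta> ((EL P \<Delta> (Lst A G v))[j := Y']))"
  using EL_props[OF fin Lst_set Lst_h[OF G v]] unfolding Lst_def by simp

lemma A1_solves: "solves C \<Delta> (one_problem P) (A1 A)"
  unfolding solves_def
proof (intro ballI allI impI conjI)
  fix G v assume G: "G \<in> C" and v: "v < nv G"
  let ?E = "EL P \<Delta> (Lst A G v)"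
  have EL1: "length ?E = deg G v" and EL2: "\<forall>k<deg G v. T A G v k \<subseteq> ?E!k"
    and EL3: "set ?E \<subseteq> Pow (Pow (fP P \<Delta>))" and EL4: "all_h (half_problem P) \<Delta> ?E"
    and EL5: "\<forall>j < length ?E. \<forall>Y'. ?E ! j \<subset> Y' \<and> Y' \<subseteq> Pow (fP P \<Delta>) \<longrightarrow>
                  \<not> all_h (half_problem P) \<Delta> (?E[j := Y'])"
    using EL_Lst[OF G v, THEN conjunct1] EL_Lst[OF G v, THEN conjunct2, THEN conjunct1]
      EL_Lst[OF G v, THEN conjunct2, THEN conjunct2, THEN conjunct1]
      EL_Lst[OF G v, THEN conjunct2, THEN conjunct2, THEN conjunct2, THEN conjunct1]
      EL_Lst[OF G v, THEN conjunct2, THEN conjunct2, THEN conjunct2, THEN conjunct2] by this+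
  have inF: "A1 A G v k \<in> Pow (Pow (fP P \<Delta>))" if kk: "k < deg G v" for k
  proof -
    have "?E ! k \<in> set ?E" by (rule nth_mem) (use EL1 kk in simp)
    then show ?thesis using EL3 unfolding A1_def by blast
  qed
  {
    fix k assume k: "k < deg G v"
    show "A1 A G v k \<in> fP (one_problem P) \<Delta>" using inF[OF k] by simp
    let ?u = "fst (conn G (v,k))" and ?j = "snd (conn G (v,k))"
    note pf = port_facts[OF G v k]
    let ?E2 = "EL P \<Delta> (Lst A G ?u)"
    have F1: "length ?E2 = deg G ?u" and F2: "\<forall>k<deg G ?u. T A G ?u k \<subseteq> ?E2!k"
      and F3: "set ?E2 \<subseteq> Pow (Pow (fP P \<Delta>))"
      using EL_Lst[OF G pf(1), THEN conjunct1] EL_Lst[OF G pf(1), THEN conjunct2, THEN conjunct1]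
      EL_Lst[OF G pf(1), THEN conjunct2, THEN conjunct2, THEN conjunct1] by this+
    have "?E2 ! ?j \<in> set ?E2" by (rule nth_mem) (use F1 pf(2) in simp)
    hence inF2: "A1 A G ?u ?j \<in> Pow (Pow (fP P \<Delta>))" using F3 unfolding A1_def by blast
    have y: "B A G v k \<in> A1 A G v k" using T_self[OF G v, of k] EL2 k unfolding A1_def by blast
    have z: "B A G ?u ?j \<in> A1 A G ?u ?j" using T_self[OF G pf(1), of ?j] F2 pf(2) unfolding A1_def by blast
    have g: "{#B A G v k, B A G ?u ?j#} \<in> gP (half_problem P) \<Delta>" using B_props(3)[OF G v k] .
    have i1: "A1 A G v k \<subseteq> Pow (fP P \<Delta>)" and i2: "A1 A G ?u ?j \<subseteq> Pow (fP P \<Delta>)"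
      using inF[OF k] inF2 by simp_all
    show "{#A1 A G v k, A1 A G ?u ?j#} \<in> gP (one_problem P) \<Delta>"
      unfolding one_simps mem_Collect_eq
      apply (rule exI[of _ "A1 A G v k"], rule exI[of _ "A1 A G ?u ?j"])
      apply (intro conjI refl i1 i2)
      using y z g by blast
  }
  have m: "map (A1 A G v) [0..<deg G v] = ?E"
    unfolding A1_def using map_nth[of ?E] EL1 by simp
  have le: "length ?E \<le> \<Delta>" using EL1 degle[OF G v] by simp
  show "mset (map (A1 A G v) [0..<deg G v]) \<in> hP (one_problem P) \<Delta>"
    unfolding m one_simps mem_Collect_eq
    apply (rule exI[of _ ?E])
    apply (intro conjI refl le EL3 EL4)
    using EL5 by blast
qed

lemma A1_round: "t_round_alg C (t-1) (A1 A)"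
  unfolding t_round_alg_def
proof (intro ballI allI impI)
  fix G H v v' i assume "G \<in> C" "H \<in> C" "v < nv G" "v' < nv H" and hiso: "nbhd_iso (t-1) G v H v'"
    and "i < deg G v"
  have dg: "deg H v' = deg G v" using nbhd_iso_deg[OF hiso] .
  have "Lst A G v = Lst A H v'" unfolding Lst_def using dg T_inv[OF hiso] by simp
  then show "A1 A G v i = A1 A H v' i" unfolding A1_def by simp
qed

end

lemma dir12:
  assumes "t_round_alg C t A" "solves C \<Delta> P A"
  shows "\<exists>A'. t_round_alg C (t-1) A' \<and> solves C \<Delta> (one_problem P) A'"
  using A1_round[OF assms] A1_solves[OF assms] by blast

end
theorem theorem3:
  fixes P :: "'o problem"
    and C :: "'l pgraph set"
    and Sig :: "'l set"
    and ori :: "'l \<Rightarrow> bool"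
    and n \<Delta> t :: nat
  assumes "problem_wf P"
    and "finite Sig"
    and "\<forall>G\<in>C. simple_connected_pgraph G \<and> nv G = n \<and> max_degree G \<Delta> \<and>
                 (\<forall>p\<in>ports G. inp G p \<in> Sig)"
    and "\<forall>G\<in>C. \<forall>p\<in>ports G. ori (inp G p) \<noteq> ori (inp G (conn G p))"
    and "t > 0"
    and "t_independent C t"
    and "\<forall>G\<in>C. girth_at_least G (2 * t + 2)"
  shows "(\<exists>A :: 'l pgraph \<Rightarrow> nat \<Rightarrow> nat \<Rightarrow> 'o. t_round_alg C t A \<and> solves C \<Delta> P A) \<longleftrightarrow>
         (\<exists>A :: 'l pgraph \<Rightarrow> nat \<Rightarrow> nat \<Rightarrow> 'o set set.
             t_round_alg C (t - 1) A \<and> solves C \<Delta> (one_problem P) A)"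
proof -
  interpret setting P C ori \<Delta> t
    using assms by unfold_locales blast+
  show ?thesis using dir12 dir21 by blast
qed

end
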